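(* Let $(G,D,\star)$ be a probabilistic metric space where $\star$ is a continuous triangle function. Then $(\Pi(G),\mathbb D,\star)$ is a completion of $G$: it is complete, $\delta:G\to\Pi(G)$ is an isometric embedding ($\mathbb D(\delta_a,\delta_b)=D(a,b)$) with dense image, and if $(X,\Lambda,\star)$ is any complete probabilistic metric space with an isometric map $\varphi:G\to X$ whose image is dense, then there is a bijective isometry $T:\Pi(G)\to X$ with $T\circ\delta=\varphi$. If moreover $(G,\cdot,D,\star)$ is an invariant probabilistic metric group, then $(\Pi(G),\odot,\mathbb D,\star)$ is its invariant probabilistic metric group completion: $\delta$ is in addition an injective group homomorphism, and if $(X,\Lambda,\star)$ is a complete invariant probabilistic metric group and $\varphi$ an isometric group homomorphism with dense image, then $T$ above is an isometric group isomorphism.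
   Context: A distribution function is a nondecreasing, left-continuous function $F:[-\infty,+\infty]\to[0,1]$ with $F(-\infty)=0$, $F(+\infty)=1$; $\Delta^+$ is the set of distribution functions with $F(0)=0$, ordered pointwise (a complete lattice with maximum $\mathcal H_0$, $\mathcal H_0(t)=0$ for $t\le0$, $1$ for $t>0$). A triangle function is a binary operation $\star$ on $\Delta^+$ that is commutative, associative, nondecreasing in each argument, with $F\star\mathcal H_0=F$. $F_n\xrightarrow{w}F$ means $F_n(t)\to F(t)$ at every continuity point $t\in\mathbb R$ of $F$; $\star$ is continuous if $F_n\star L_n\xrightarrow{w}F\star L$ whenever $F_n\xrightarrow{w}F$, $L_n\xrightarrow{w}L$. A probabilistic metric space $(G,D,\star)$ consists of a set $G$, a triangle function $\star$ and $D:G\times G\to\Delta^+$ with (i) $D(p,q)=\mathcal H_0$ iff $p=q$; (ii) $D(p,q)=D(q,p)$; (iii) $D(p,q)\star D(q,r)\le D(p,r)$. If $(G,\cdot)$ is a group and $D(pr,qr)=D(rp,rq)=D(p,q)$ for all $p,q,r$, it is an invariant probabilistic metric group. A sequence $(z_n)$ is Cauchy if $D(z_n,z_p)\xrightarrow{w}\mathcal H_0$ as $n,p\to\infty$; completeness means every Cauchy sequence has a point $z$ with $D(z_n,z)\xrightarrow{w}\mathcal H_0$. A subset $S$ is dense if every point is the limit (distance $\xrightarrow{w}\mathcal H_0$) of a sequence in $S$. A map $\varphi$ is isometric if it preserves the probabilistic distances. A map $f:G\to\Delta^+$ is probabilistic $1$-Lipschitz if $D(x,y)\star f(y)\le f(x)$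 for all $x,y$. $\delta_a(y)=D(y,a)$. $\Pi(G)$ is the set of probabilistic $1$-Lipschitz maps $f$ for which there is a Cauchy sequence $(a_n)\subset G$ with $D(a_n,x)\xrightarrow{w}f(x)$ for all $x$. $\mathbb D(f,g)=\sup_{x\in G}f(x)\star g(x)$ for $f,g\in\Pi(G)$. For maps $f,g:G\to\Delta^+$, $(f\odot g)(x)=\sup_{y,z\in G,\ yz=x}f(y)\star g(z)$. *)

theory Defs
  imports Complex_Main "HOL-Library.Extended_Real" "HOL-Algebra.Group"
begin

type_synonym dfun = "ereal \<Rightarrow> real"

definition distfun :: "dfun \<Rightarrow> bool" where
  "distfun F \<longleftrightarrow> mono F \<and> (\<forall>t. 0 \<le> F t \<and> F t \<le> 1)
     \<and> (\<forall>x::real. continuous (at_left (ereal x)) F)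
     \<and> F (-\<infinity>) = 0 \<and> F \<infinity> = 1"

definition Delta_plus :: "dfun set" where
  "Delta_plus = {F. distfun F \<and> F 0 = 0}"

definition H0 :: dfun where
  "H0 = (\<lambda>t. if t \<le> 0 then 0 else 1)"

text \<open>Supremum in the complete lattice Delta_plus (pointwise supremum; the bottom
  element for the empty family).\<close>
definition dsup :: "dfun set \<Rightarrow> dfun" where
  "dsup A = (\<lambda>t. if t = \<infinity> then 1 else Sup (insert 0 ((\<lambda>F. F t) ` A)))"

definition triangle_function :: "(dfun \<Rightarrow> dfun \<Rightarrow> dfun) \<Rightarrow> bool" where
  "triangle_function tf \<longleftrightarrow>
     (\<forall>F\<in>Delta_plus. \<forall>L\<in>Delta_plus. tf F L \<in> Delta_plus)
   \<and> (\<forall>F\<in>Delta_plus. \<forall>L\<in>Delta_plus. tf F L = tf L F)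
   \<and> (\<forall>F\<in>Delta_plus. \<forall>L\<in>Delta_plus. \<forall>M\<in>Delta_plus. tf (tf F L) M = tf F (tf L M))
   \<and> (\<forall>F\<in>Delta_plus. \<forall>F'\<in>Delta_plus. \<forall>L\<in>Delta_plus. F \<le> F' \<longrightarrow> tf F L \<le> tf F' L)
   \<and> (\<forall>F\<in>Delta_plus. \<forall>L\<in>Delta_plus. \<forall>L'\<in>Delta_plus. L \<le> L' \<longrightarrow> tf F L \<le> tf F L')
   \<and> (\<forall>F\<in>Delta_plus. tf F H0 = F)"

definition wconv :: "(nat \<Rightarrow> dfun) \<Rightarrow> dfun \<Rightarrow> bool" where
  "wconv Fs F \<longleftrightarrow> (\<forall>t::real. isCont (\<lambda>x. F (ereal x)) t \<longrightarrow>
       (\<lambda>n. Fs n (ereal t)) \<longlonglongrightarrow> F (ereal t))"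

definition continuous_tf :: "(dfun \<Rightarrow> dfun \<Rightarrow> dfun) \<Rightarrow> bool" where
  "continuous_tf tf \<longleftrightarrow> (\<forall>Fs F Ls L. (\<forall>n. Fs n \<in> Delta_plus) \<and> (\<forall>n. Ls n \<in> Delta_plus)
       \<and> F \<in> Delta_plus \<and> L \<in> Delta_plus \<and> wconv Fs F \<and> wconv Ls L
       \<longrightarrow> wconv (\<lambda>n. tf (Fs n) (Ls n)) (tf F L))"

definition pm_space :: "'a set \<Rightarrow> ('a \<Rightarrow> 'a \<Rightarrow> dfun) \<Rightarrow> (dfun \<Rightarrow> dfun \<Rightarrow> dfun) \<Rightarrow> bool" where
  "pm_space S D tf \<longleftrightarrow> triangle_function tf
     \<and> (\<forall>p\<in>S. \<forall>q\<in>S. D p q \<in> Delta_plus)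
     \<and> (\<forall>p\<in>S. \<forall>q\<in>S. D p q = H0 \<longleftrightarrow> p = q)
     \<and> (\<forall>p\<in>S. \<forall>q\<in>S. D p q = D q p)
     \<and> (\<forall>p\<in>S. \<forall>q\<in>S. \<forall>r\<in>S. tf (D p q) (D q r) \<le> D p r)"

definition pm_cauchy :: "('a \<Rightarrow> 'a \<Rightarrow> dfun) \<Rightarrow> (nat \<Rightarrow> 'a) \<Rightarrow> bool" where
  "pm_cauchy D z \<longleftrightarrow> (\<forall>t::real. isCont (\<lambda>x. H0 (ereal x)) t \<longrightarrow>
     (\<forall>e>0. \<exists>N. \<forall>n\<ge>N. \<forall>p\<ge>N. \<bar>D (z n) (z p) (ereal t) - H0 (ereal t)\<bar> < e))"

definition pm_converges :: "('a \<Rightarrow> 'a \<Rightarrow> dfun) \<Rightarrow> (nat \<Rightarrow> 'a) \<Rightarrow> 'a \<Rightarrow> bool" where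
  "pm_converges D z a \<longleftrightarrow> wconv (\<lambda>n. D (z n) a) H0"

definition pm_complete :: "'a set \<Rightarrow> ('a \<Rightarrow> 'a \<Rightarrow> dfun) \<Rightarrow> bool" where
  "pm_complete S D \<longleftrightarrow> (\<forall>z. range z \<subseteq> S \<and> pm_cauchy D z \<longrightarrow> (\<exists>a\<in>S. pm_converges D z a))"

definition pm_dense :: "'a set \<Rightarrow> ('a \<Rightarrow> 'a \<Rightarrow> dfun) \<Rightarrow> 'a set \<Rightarrow> bool" where
  "pm_dense S D A \<longleftrightarrow> A \<subseteq> S \<and> (\<forall>x\<in>S. \<exists>z. range z \<subseteq> A \<and> pm_converges D z x)"

definition isometric :: "'a set \<Rightarrow> ('a \<Rightarrow> 'a \<Rightarrow> dfun) \<Rightarrow> ('b \<Rightarrow> 'b \<Rightarrow> dfun) \<Rightarrow> ('a \<Rightarrow> 'b) \<Rightarrow> bool" where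
  "isometric S D L \<phi> \<longleftrightarrow> (\<forall>a\<in>S. \<forall>b\<in>S. L (\<phi> a) (\<phi> b) = D a b)"

definition prob_lipschitz ::
  "'a set \<Rightarrow> ('a \<Rightarrow> 'a \<Rightarrow> dfun) \<Rightarrow> (dfun \<Rightarrow> dfun \<Rightarrow> dfun) \<Rightarrow> ('a \<Rightarrow> dfun) \<Rightarrow> bool" where
  "prob_lipschitz S D tf f \<longleftrightarrow> (\<forall>x\<in>S. f x \<in> Delta_plus)
     \<and> (\<forall>x\<in>S. \<forall>y\<in>S. tf (D x y) (f y) \<le> f x)"

definition PiG :: "'a set \<Rightarrow> ('a \<Rightarrow> 'a \<Rightarrow> dfun) \<Rightarrow> (dfun \<Rightarrow> dfun \<Rightarrow> dfun) \<Rightarrow> ('a \<Rightarrow> dfun) set" where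
  "PiG S D tf = {f. (\<forall>x. x \<notin> S \<longrightarrow> f x = undefined) \<and> prob_lipschitz S D tf f
      \<and> (\<exists>a. range a \<subseteq> S \<and> pm_cauchy D a \<and> (\<forall>x\<in>S. wconv (\<lambda>n. D (a n) x) (f x)))}"

definition delta :: "'a set \<Rightarrow> ('a \<Rightarrow> 'a \<Rightarrow> dfun) \<Rightarrow> 'a \<Rightarrow> ('a \<Rightarrow> dfun)" where
  "delta S D a = (\<lambda>y. if y \<in> S then D y a else undefined)"

definition DD :: "'a set \<Rightarrow> (dfun \<Rightarrow> dfun \<Rightarrow> dfun) \<Rightarrow> ('a \<Rightarrow> dfun) \<Rightarrow> ('a \<Rightarrow> dfun) \<Rightarrow> dfun" where
  "DD S tf f g = dsup {tf (f x) (g x) | x. x \<in> S}"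

definition odot :: "('a, 'm) monoid_scheme \<Rightarrow> (dfun \<Rightarrow> dfun \<Rightarrow> dfun)
                    \<Rightarrow> ('a \<Rightarrow> dfun) \<Rightarrow> ('a \<Rightarrow> dfun) \<Rightarrow> ('a \<Rightarrow> dfun)" where
  "odot G tf f g = (\<lambda>x. if x \<in> carrier G then
      dsup {tf (f y) (g z) | y z. y \<in> carrier G \<and> z \<in> carrier G \<and> y \<otimes>\<^bsub>G\<^esub> z = x}
    else undefined)"

definition pm_group :: "('a, 'm) monoid_scheme \<Rightarrow> ('a \<Rightarrow> 'a \<Rightarrow> dfun) \<Rightarrow> (dfun \<Rightarrow> dfun \<Rightarrow> dfun) \<Rightarrow> bool" where
  "pm_group G D tf \<longleftrightarrow> group G \<and> pm_space (carrier G) D tf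
     \<and> (\<forall>p\<in>carrier G. \<forall>q\<in>carrier G. \<forall>r\<in>carrier G.
          D (p \<otimes>\<^bsub>G\<^esub> r) (q \<otimes>\<^bsub>G\<^esub> r) = D p q \<and> D (r \<otimes>\<^bsub>G\<^esub> p) (r \<otimes>\<^bsub>G\<^esub> q) = D p q)"

definition PiGroup :: "('a, 'm) monoid_scheme \<Rightarrow> ('a \<Rightarrow> 'a \<Rightarrow> dfun) \<Rightarrow> (dfun \<Rightarrow> dfun \<Rightarrow> dfun)
                       \<Rightarrow> ('a \<Rightarrow> dfun) monoid" where
  "PiGroup G D tf = \<lparr>carrier = PiG (carrier G) D tf, mult = odot G tf,
                      one = delta (carrier G) D \<one>\<^bsub>G\<^esub>\<rparr>"

end

theory Submission
  imports Defs "HOL-Probability.Helly_Selection"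
begin

abbreviation P where "P \<equiv> Delta_plus"

lemma P_D: assumes "F \<in> P"
  shows "mono F" "\<And>t. 0 \<le> F t" "\<And>t. F t \<le> 1" "\<And>x. continuous (at_left (ereal x)) F"
    "F (-\<infinity>) = 0" "F \<infinity> = 1" "F 0 = 0"
  using assms by (auto simp: Delta_plus_def distfun_def)

lemma P_nonpos: assumes "F \<in> P" "t \<le> 0" shows "F t = 0"
proof -
  have "F t \<le> F 0" using P_D(1)[OF assms(1)] assms(2) by (simp add: mono_def)
  thus ?thesis using P_D(2,7)[OF assms(1)] by (metis order_antisym)
qed

lemma P_le_H0: assumes "F \<in> P" shows "F \<le> H0"
  unfolding le_fun_def H0_def using P_nonpos[OF assms] P_D(3)[OF assms] by auto

lemma H0_P: "H0 \<in> P"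
proof -
  have m: "mono H0" unfolding mono_def H0_def by auto
  have c: "continuous (at_left (ereal x)) H0" for x
  proof (cases "x \<le> 0")
    case True
    have "eventually (\<lambda>y. H0 y = 0) (at_left (ereal x))"
      unfolding eventually_at_filter
      proof (rule always_eventually, safe)
      fix y assume "y < ereal x"
      moreover have "ereal x \<le> 0" using True by (simp add: zero_ereal_def)
      ultimately have "y \<le> 0" by (meson less_imp_le order_trans)
      thus "H0 y = 0" by (simp add: H0_def)
    qed
    hence "(H0 \<longlongrightarrow> 0) (at_left (ereal x))" by (simp add: tendsto_eventually)
    thus ?thesis using True unfolding continuous_within H0_def by (simp add: zero_ereal_def)
  next
    case False
    hence "ereal 0 < ereal x" by simp
    have "eventually (\<lambda>y. H0 y = 1) (at_left (ereal x))"
      by (rule eventually_at_leftI[OF _ \<open>ereal 0 < ereal x\<close>]) (auto simp: H0_def zero_ereal_def)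
    hence "(H0 \<longlongrightarrow> 1) (at_left (ereal x))" by (simp add: tendsto_eventually)
    thus ?thesis using False unfolding continuous_within H0_def by (simp add: zero_ereal_def)
  qed
  show ?thesis unfolding Delta_plus_def distfun_def using m c by (auto simp: H0_def)
qed

lemma cont_left_real:
  "continuous (at_left (ereal x)) F \<longleftrightarrow> continuous (at_left x) (\<lambda>y. F (ereal y))"
proof -
  have "continuous (at_left (ereal x)) F \<longleftrightarrow> (F \<longlongrightarrow> F (ereal x)) (at_left (ereal x))"
    by (rule continuous_within)
  also have "\<dots> \<longleftrightarrow> ((\<lambda>y. F (ereal y)) \<longlongrightarrow> F (ereal x)) (at_left x)"
    by (simp add: at_left_ereal filterlim_filtermap)
  also have "\<dots> \<longleftrightarrow> continuous (at_left x) (\<lambda>y. F (ereal y))"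
    by (simp add: continuous_within)
  finally show ?thesis .
qed

abbreviation fr :: "dfun \<Rightarrow> real \<Rightarrow> real" where "fr F \<equiv> (\<lambda>x. F (ereal x))"

lemma P_mono_real: "F \<in> P \<Longrightarrow> mono (fr F)"
  using P_D(1) unfolding mono_def by auto

lemma P_ctble: "F \<in> P \<Longrightarrow> countable {x. \<not> isCont (fr F) x}"
  using mono_ctble_discont[OF P_mono_real] by simp

lemma exists_notin_ctble:
  fixes s t :: real
  assumes "countable C" "s < t" shows "\<exists>u. s < u \<and> u < t \<and> u \<notin> C"
proof (rule ccontr)
  assume "\<not> ?thesis"
  hence "{s<..<t} \<subseteq> C" by auto
  hence "countable {s<..<t}" using assms(1) countable_subset by blast
  thus False using uncountable_open_interval assms(2) by blast
qed

lemma exists_cont2: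
  assumes "F \<in> P" "G \<in> P" "s < t"
  shows "\<exists>u. s < u \<and> u < t \<and> isCont (fr F) u \<and> isCont (fr G) u"
proof -
  have "countable ({x. \<not> isCont (fr F) x} \<union> {x. \<not> isCont (fr G) x})"
    using P_ctble assms by auto
  from exists_notin_ctble[OF this assms(3)] show ?thesis by auto
qed

lemma left_lim_le_real:
  fixes g :: "real \<Rightarrow> real"
  assumes "continuous (at_left t) g" "\<And>s. s < t \<Longrightarrow> g s \<le> c"
  shows "g t \<le> c"
proof -
  have "(g \<longlongrightarrow> g t) (at_left t)" using assms(1) by (simp add: continuous_within)
  moreover have "eventually (\<lambda>s. g s \<le> c) (at_left t)"
    unfolding eventually_at_filter by (rule always_eventually) (auto intro: assms(2))
  ultimately show ?thesis by (rule tendsto_upperbound) (simp add: trivial_limit_at_left_real)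
qed

lemma left_lim_le:
  assumes "F \<in> P" "\<And>s. s < t \<Longrightarrow> F (ereal s) \<le> c"
  shows "F (ereal t) \<le> c"
  using left_lim_le_real[of t "fr F" c] P_D(4)[OF assms(1)] assms(2)
  by (simp add: cont_left_real)

lemma wconv_le:
  assumes F: "F \<in> P" and G: "G \<in> P" and cF: "wconv Fs F" and cG: "wconv Gs G"
    and le: "\<And>n t. Fs n t \<le> Gs n t"
  shows "F \<le> G"
proof (rule le_funI)
  fix t :: ereal
  show "F t \<le> G t"
  proof (cases t)
    case (real r)
    have "F (ereal r) \<le> G (ereal r)"
    proof (rule left_lim_le[OF F])
      fix s assume "s < r"
      then obtain u where u: "s < u" "u < r" "isCont (fr F) u" "isCont (fr G) u"
        using exists_cont2[OF F G] by blast
      have "F (ereal s) \<le> F (ereal u)" using P_D(1)[OF F] u(1) by (simp add: mono_def)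
      also have "F (ereal u) \<le> G (ereal u)"
        using cF cG u le unfolding wconv_def by (intro LIMSEQ_le[of "\<lambda>n. Fs n (ereal u)" _ "\<lambda>n. Gs n (ereal u)"]) auto
      also have "G (ereal u) \<le> G (ereal r)" using P_D(1)[OF G] u(2) by (simp add: mono_def)
      finally show "F (ereal s) \<le> G (ereal r)" .
    qed
    thus ?thesis using real by simp
  qed (use P_D[OF F] P_D[OF G] in auto)
qed

lemma wconv_le_mono:
  assumes F: "F \<in> P" and cF: "wconv Fs F" and le: "\<And>n. Fs n \<le> C"
    and C: "mono C" "\<And>t. 0 \<le> C t" "1 \<le> C \<infinity>"
  shows "F \<le> C"
proof (rule le_funI)
  fix t :: ereal
  show "F t \<le> C t"
  proof (cases t)
    case (real r)
    have "F (ereal r) \<le> C (ereal r)"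
    proof (rule left_lim_le[OF F])
      fix s assume "s < r"
      then obtain u where u: "s < u" "u < r" "isCont (fr F) u"
        using exists_cont2[OF F F] by blast
      have "F (ereal s) \<le> F (ereal u)" using P_D(1)[OF F] u(1) by (simp add: mono_def)
      also have "F (ereal u) \<le> C (ereal u)"
        using cF u le unfolding wconv_def le_fun_def by (intro LIMSEQ_le_const2[of "\<lambda>n. Fs n (ereal u)"]) auto
      also have "C (ereal u) \<le> C (ereal r)" using C(1) u(2) by (simp add: mono_def)
      finally show "F (ereal s) \<le> C (ereal r)" .
    qed
    thus ?thesis using real by simp
  qed (use P_D[OF F] C in auto)
qed

lemma wconv_const: "wconv (\<lambda>n. F) F"
  unfolding wconv_def by simp

lemma wconv_le_const:
  assumes "F \<in> P" "C \<in> P" "wconv Fs F" "\<And>n. Fs n \<le> C" shows "F \<le> C"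
  using wconv_le[OF assms(1,2,3) wconv_const[of C]] assms(4) by (auto simp: le_fun_def)

lemma const_le_wconv:
  assumes "C \<in> P" "F \<in> P" "wconv Fs F" "\<And>n. C \<le> Fs n" shows "C \<le> F"
  using wconv_le[OF assms(1,2) wconv_const[of C] assms(3)] assms(4) by (auto simp: le_fun_def)

lemma wconv_unique:
  assumes "F \<in> P" "G \<in> P" "wconv Fs F" "wconv Fs G" shows "F = G"
  using wconv_le[OF assms(1,2,3,4)] wconv_le[OF assms(2,1,4,3)] by (auto intro: order.antisym)

lemma H0_pos: "0 < t \<Longrightarrow> H0 (ereal t) = 1" by (simp add: H0_def)
lemma H0_nonpos: "t \<le> 0 \<Longrightarrow> H0 (ereal t) = 0" by (simp add: H0_def)

lemma isCont_H0: assumes "0 < t" shows "isCont (fr H0) t"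
proof -
  have "eventually (\<lambda>x. x \<in> {0<..}) (nhds t)"
    by (rule eventually_nhds_in_open) (use assms in auto)
  hence "eventually (\<lambda>x. fr H0 x = 1) (nhds t)"
    by (rule eventually_mono) (simp add: H0_def)
  hence "eventually (\<lambda>x. fr H0 x = 1) (at t)" unfolding eventually_at_filter
    by (rule eventually_mono) simp
  hence "(fr H0 \<longlongrightarrow> 1) (at t)" by (simp add: tendsto_eventually)
  thus ?thesis using assms by (simp add: continuous_at H0_def)
qed

lemma wconv_H0_iff:
  assumes "\<And>n. Fs n \<in> P"
  shows "wconv Fs H0 \<longleftrightarrow> (\<forall>t>0. (\<lambda>n. Fs n (ereal t)) \<longlonglongrightarrow> 1)"
proof
  assume "wconv Fs H0"
  show "\<forall>t>0. (\<lambda>n. Fs n (ereal t)) \<longlonglongrightarrow> 1"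
  proof (intro allI impI)
    fix t :: real assume "0 < t"
    with \<open>wconv Fs H0\<close> have "(\<lambda>n. Fs n (ereal t)) \<longlonglongrightarrow> H0 (ereal t)"
      unfolding wconv_def using isCont_H0 by blast
    thus "(\<lambda>n. Fs n (ereal t)) \<longlonglongrightarrow> 1" using H0_pos[OF \<open>0 < t\<close>] by simp
  qed
next
  assume h: "\<forall>t>0. (\<lambda>n. Fs n (ereal t)) \<longlonglongrightarrow> 1"
  show "wconv Fs H0" unfolding wconv_def
  proof (intro allI impI)
    fix t :: real
    show "(\<lambda>n. Fs n (ereal t)) \<longlonglongrightarrow> H0 (ereal t)"
    proof (cases "0 < t")
      case True thus ?thesis using h H0_pos by simp
    next
      case False
      hence "\<And>n. Fs n (ereal t) = 0" using P_nonpos[OF assms] by simp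
      thus ?thesis using False H0_nonpos by simp
    qed
  qed
qed

lemma wconv_H0_iff2:
  assumes "\<And>n. Fs n \<in> P"
  shows "wconv Fs H0 \<longleftrightarrow> (\<forall>t>0. \<forall>e>0. \<exists>N. \<forall>n\<ge>N. 1 - e < Fs n (ereal t))"
proof -
  have "(\<lambda>n. Fs n (ereal t)) \<longlonglongrightarrow> 1 \<longleftrightarrow> (\<forall>e>0. \<exists>N. \<forall>n\<ge>N. 1 - e < Fs n (ereal t))" for t
  proof -
    have "dist (Fs n (ereal t)) 1 < e \<longleftrightarrow> 1 - e < Fs n (ereal t)" for n e
    proof -
      have "Fs n (ereal t) \<le> 1" using P_D(3)[OF assms] by blast
      thus ?thesis unfolding dist_real_def by (simp add: abs_if, linarith)
    qed
    thus ?thesis unfolding LIMSEQ_def by simp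
  qed
  thus ?thesis using wconv_H0_iff[OF assms] by simp
qed

lemma wconv_H0_ge:
  assumes "\<And>n. Fs n \<in> P" "\<And>n. Gs n \<in> P" "wconv Gs H0" "\<And>n. Gs n \<le> Fs n"
  shows "wconv Fs H0"
  unfolding wconv_H0_iff[OF assms(1)]
proof (intro allI impI)
  fix t :: real assume "0 < t"
  hence g: "(\<lambda>n. Gs n (ereal t)) \<longlonglongrightarrow> 1" using iffD1[OF wconv_H0_iff[OF assms(2)] assms(3)] by blast
  have e1: "eventually (\<lambda>n. Gs n (ereal t) \<le> Fs n (ereal t)) sequentially"
    using assms(4) unfolding le_fun_def by (intro always_eventually) blast
  have e2: "eventually (\<lambda>n. Fs n (ereal t) \<le> 1) sequentially"
    using P_D(3)[OF assms(1)] by (intro always_eventually) blast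
  show "(\<lambda>n. Fs n (ereal t)) \<longlonglongrightarrow> 1"
    by (rule tendsto_sandwich[OF e1 e2 g tendsto_const])
qed

lemma wconv_compose:
  assumes "wconv Fs F" "filterlim r at_top sequentially"
  shows "wconv (\<lambda>i. Fs (r i)) F"
  unfolding wconv_def
proof (intro allI impI)
  fix t assume "isCont (fr F) t"
  hence "(\<lambda>n. Fs n (ereal t)) \<longlonglongrightarrow> F (ereal t)" using assms(1) unfolding wconv_def by blast
  from filterlim_compose[OF this assms(2)] show "(\<lambda>i. Fs (r i) (ereal t)) \<longlonglongrightarrow> F (ereal t)" .
qed

lemma filterlim_ge_id: "(\<And>i. i \<le> r i) \<Longrightarrow> filterlim r at_top sequentially"
  by (rule filterlim_at_top_mono[OF filterlim_ident]) (rule always_eventually, simp)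

lemma wconv_compose_ge:
  assumes "wconv Fs F" "\<And>i. i \<le> r i" shows "wconv (\<lambda>i. Fs (r i)) F"
  by (rule wconv_compose[OF assms(1) filterlim_ge_id[OF assms(2)]])

definition dcauchy :: "(nat \<Rightarrow> nat \<Rightarrow> dfun) \<Rightarrow> bool" where
  "dcauchy E \<longleftrightarrow> (\<forall>t>0. \<forall>e>0. \<exists>N. \<forall>n\<ge>N. \<forall>p\<ge>N. 1 - e < E n p (ereal t))"

lemma dcauchy_iff:
  assumes EP: "\<And>n p. E n p \<in> P"
  shows "dcauchy E \<longleftrightarrow> (\<forall>r s. (\<forall>i. i \<le> r i \<and> i \<le> s i) \<longrightarrow> wconv (\<lambda>i. E (r i) (s i)) H0)"
proof
  assume d: "dcauchy E"
  show "\<forall>r s. (\<forall>i. i \<le> r i \<and> i \<le> s i) \<longrightarrow> wconv (\<lambda>i. E (r i) (s i)) H0"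
  proof (intro allI impI)
    fix r s :: "nat \<Rightarrow> nat" assume rs: "\<forall>i. i \<le> r i \<and> i \<le> s i"
    have EP': "\<And>i. E (r i) (s i) \<in> P" using EP by blast
    show "wconv (\<lambda>i. E (r i) (s i)) H0" unfolding wconv_H0_iff2[of "\<lambda>i. E (r i) (s i)", OF EP']
    proof (intro allI impI)
      fix t e :: real assume "0 < t" "0 < e"
      have "\<forall>t>0. \<forall>e>0. \<exists>N. \<forall>n\<ge>N. \<forall>p\<ge>N. 1 - e < E n p (ereal t)" using d unfolding dcauchy_def .
      then obtain N where N: "\<forall>n\<ge>N. \<forall>p\<ge>N. 1 - e < E n p (ereal t)" using \<open>0<t\<close> \<open>0<e\<close> by blast
      show "\<exists>N. \<forall>n\<ge>N. 1 - e < E (r n) (s n) (ereal t)"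
      proof (rule exI[of _ N], intro allI impI)
        fix n assume "N \<le> n"
        hence "N \<le> r n" "N \<le> s n" using rs le_trans by blast+
        thus "1 - e < E (r n) (s n) (ereal t)" using N by blast
      qed
    qed
  qed
next
  assume h: "\<forall>r s. (\<forall>i. i \<le> r i \<and> i \<le> s i) \<longrightarrow> wconv (\<lambda>i. E (r i) (s i)) H0"
  show "dcauchy E"
  proof (rule ccontr)
    assume "\<not> dcauchy E"
    hence "\<not> (\<forall>t>0. \<forall>e>0. \<exists>N. \<forall>n\<ge>N. \<forall>p\<ge>N. 1 - e < E n p (ereal t))"
      unfolding dcauchy_def .
    then obtain t where t: "0 < t" "\<not> (\<forall>e>0. \<exists>N. \<forall>n\<ge>N. \<forall>p\<ge>N. 1 - e < E n p (ereal t))"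
      by blast
    then obtain e where e: "0 < e" "\<not> (\<exists>N. \<forall>n\<ge>N. \<forall>p\<ge>N. 1 - e < E n p (ereal t))"
      by blast
    have te3: "\<forall>N. \<exists>n\<ge>N. \<exists>p\<ge>N. \<not> 1 - e < E n p (ereal t)"
      using e(2) by (simp add: not_less)
    note te = t(1) e(1) te3
    have "\<forall>N. \<exists>q. N \<le> fst q \<and> N \<le> snd q \<and> \<not> 1 - e < E (fst q) (snd q) (ereal t)"
    proof
      fix N
      from te(3) obtain n p where "N \<le> n" "N \<le> p" "\<not> 1 - e < E n p (ereal t)" by blast
      thus "\<exists>q. N \<le> fst q \<and> N \<le> snd q \<and> \<not> 1 - e < E (fst q) (snd q) (ereal t)"
        by (intro exI[of _ "(n, p)"]) simp
    qed
    from choice[OF this] obtain q where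
      q: "\<forall>N. N \<le> fst (q N) \<and> N \<le> snd (q N) \<and> \<not> 1 - e < E (fst (q N)) (snd (q N)) (ereal t)" ..
    define r where "r = (\<lambda>N. fst (q N))"
    define s where "s = (\<lambda>N. snd (q N))"
    have rs: "\<forall>N. N \<le> r N \<and> N \<le> s N \<and> \<not> 1 - e < E (r N) (s N) (ereal t)"
      using q unfolding r_def s_def by blast
    have EP': "\<And>i. E (r i) (s i) \<in> P" using EP by blast
    have "\<forall>i. i \<le> r i \<and> i \<le> s i" using rs by blast
    hence "wconv (\<lambda>i. E (r i) (s i)) H0" using h by blast
    hence "\<forall>t>0. \<forall>e>0. \<exists>N. \<forall>n\<ge>N. 1 - e < E (r n) (s n) (ereal t)"
      using wconv_H0_iff2[of "\<lambda>i. E (r i) (s i)", OF EP'] by simp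
    then obtain N where "\<forall>n\<ge>N. 1 - e < E (r n) (s n) (ereal t)"
      using te(1,2) by blast
    thus False using rs by blast
  qed
qed

lemma pm_cauchy_iff:
  assumes "\<And>n p. D (z n) (z p) \<in> P"
  shows "pm_cauchy D z \<longleftrightarrow> dcauchy (\<lambda>n p. D (z n) (z p))"
proof
  assume c: "pm_cauchy D z"
  show "dcauchy (\<lambda>n p. D (z n) (z p))" unfolding dcauchy_def
  proof (intro allI impI)
    fix t e :: real assume "0 < t" "0 < e"
    then obtain N where N: "\<forall>n\<ge>N. \<forall>p\<ge>N. \<bar>D (z n) (z p) (ereal t) - H0 (ereal t)\<bar> < e"
      using c isCont_H0 unfolding pm_cauchy_def by blast
    show "\<exists>N. \<forall>n\<ge>N. \<forall>p\<ge>N. 1 - e < D (z n) (z p) (ereal t)"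
    proof (rule exI[of _ N], intro allI impI)
      fix n p assume "N \<le> n" "N \<le> p"
      hence "\<bar>D (z n) (z p) (ereal t) - 1\<bar> < e" using N H0_pos[OF \<open>0<t\<close>] by simp
      thus "1 - e < D (z n) (z p) (ereal t)" by (simp add: abs_less_iff)
    qed
  qed
next
  assume c: "dcauchy (\<lambda>n p. D (z n) (z p))"
  show "pm_cauchy D z" unfolding pm_cauchy_def
  proof (intro allI impI)
    fix t e :: real assume "0 < e"
    show "\<exists>N. \<forall>n\<ge>N. \<forall>p\<ge>N. \<bar>D (z n) (z p) (ereal t) - H0 (ereal t)\<bar> < e"
    proof (cases "0 < t")
      case True
      then obtain N where N: "\<forall>n\<ge>N. \<forall>p\<ge>N. 1 - e < D (z n) (z p) (ereal t)"
        using c \<open>0<e\<close> unfolding dcauchy_def by blast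
      show ?thesis
      proof (rule exI[of _ N], intro allI impI)
        fix n p assume "N \<le> n" "N \<le> p"
        hence "1 - e < D (z n) (z p) (ereal t)" using N by blast
        moreover have "D (z n) (z p) (ereal t) \<le> 1" using P_D(3)[OF assms] by blast
        ultimately show "\<bar>D (z n) (z p) (ereal t) - H0 (ereal t)\<bar> < e"
          using H0_pos[OF True] by (simp add: abs_less_iff)
      qed
    next
      case False
      hence "\<And>n p. D (z n) (z p) (ereal t) = 0" using P_nonpos[OF assms] by simp
      thus ?thesis using False H0_nonpos \<open>0<e\<close> by simp
    qed
  qed
qed

lemma Helly_P:
  fixes Gs :: "nat \<Rightarrow> dfun"
  assumes G: "\<And>n. Gs n \<in> P"
  shows "\<exists>r F. strict_mono r \<and> F \<in> P \<and> wconv (\<lambda>k. Gs (r k)) F"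
proof -
  define f where "f n x = - Gs n (ereal (- x))" for n x
  have rc: "continuous (at_right x) (f n)" for n x
  proof -
    have "continuous (at_left (-x)) (fr (Gs n))" using P_D(4)[OF G] cont_left_real by blast
    hence "(fr (Gs n) \<longlongrightarrow> fr (Gs n) (-x)) (at_left (-x))" by (simp add: continuous_within)
    hence "(fr (Gs n) \<longlongrightarrow> fr (Gs n) (-x)) (filtermap uminus (at_right x))"
      using at_left_minus[of "-x"] by simp
    hence "((\<lambda>y. fr (Gs n) (-y)) \<longlongrightarrow> fr (Gs n) (-x)) (at_right x)" by (simp add: filterlim_filtermap)
    hence "((\<lambda>y. - fr (Gs n) (-y)) \<longlongrightarrow> - fr (Gs n) (-x)) (at_right x)" by (rule tendsto_minus)
    hence "(f n \<longlongrightarrow> f n x) (at_right x)" unfolding f_def by simp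
    thus ?thesis by (simp add: continuous_within)
  qed
  have mf: "mono (f n)" for n
  proof (rule monoI)
    fix x y :: real assume "x \<le> y"
    hence "Gs n (ereal (-y)) \<le> Gs n (ereal (-x))" using P_D(1)[OF G] by (simp add: mono_def)
    thus "f n x \<le> f n y" unfolding f_def by simp
  qed
  have bf: "\<bar>f n x\<bar> \<le> 1" for n x
    using P_D(2,3)[OF G, of n "ereal (-x)"] unfolding f_def by simp
  obtain s Fh where s: "strict_mono s" and Fh: "\<And>x. continuous (at_right x) Fh" "mono Fh"
      "\<And>x. \<bar>Fh x\<bar> \<le> 1" "\<And>x. isCont Fh x \<Longrightarrow> (\<lambda>n. f (s n) x) \<longlonglongrightarrow> Fh x"
    using Helly_selection[of f, OF rc mf bf] by blast
  define g where "g x = - Fh (- x)" for x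
  have gm: "mono g"
  proof (rule monoI)
    fix x y :: real assume "x \<le> y"
    hence "Fh (-y) \<le> Fh (-x)" using Fh(2) by (simp add: mono_def)
    thus "g x \<le> g y" unfolding g_def by simp
  qed
  have gl: "continuous (at_left x) g" for x
  proof -
    have "(Fh \<longlongrightarrow> Fh (-x)) (at_right (-x))" using Fh(1) by (simp add: continuous_within)
    hence "((\<lambda>y. - Fh y) \<longlongrightarrow> - Fh (-x)) (at_right (-x))" by (rule tendsto_minus)
    hence "((\<lambda>y. g (-y)) \<longlongrightarrow> g x) (at_right (-x))" unfolding g_def by simp
    hence "(g \<longlongrightarrow> g x) (filtermap uminus (at_right (-x)))" by (simp add: filterlim_filtermap)
    hence "(g \<longlongrightarrow> g x) (at_left x)" using at_left_minus[of x] by simp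
    thus ?thesis by (simp add: continuous_within)
  qed
  have gconv: "(\<lambda>n. Gs (s n) (ereal t)) \<longlonglongrightarrow> g t" if ct: "isCont g t" for t
  proof -
    have c1: "isCont (uminus :: real \<Rightarrow> real) (-t)" by (intro continuous_intros)
    have "isCont (\<lambda>y. g (- y)) (-t)" using isCont_o2[OF c1, of g] ct by simp
    hence "isCont (\<lambda>y. - g (- y)) (-t)" by (rule isCont_minus)
    moreover have "(\<lambda>y. - g (- y)) = Fh" unfolding g_def by auto
    ultimately have "isCont Fh (-t)" by simp
    hence "(\<lambda>n. f (s n) (-t)) \<longlonglongrightarrow> Fh (-t)" by (rule Fh(4))
    hence "(\<lambda>n. - f (s n) (-t)) \<longlonglongrightarrow> - Fh (-t)" by (rule tendsto_minus)
    thus ?thesis unfolding f_def g_def by simp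
  qed
  have ctg: "countable {x. \<not> isCont g x}" using mono_ctble_discont[OF gm] by simp
  have g0: "0 \<le> g x" for x
  proof -
    obtain u where u: "x - 1 < u" "u < x" "u \<notin> {x. \<not> isCont g x}"
      using exists_notin_ctble[OF ctg, of "x - 1" x] by auto
    have "0 \<le> g u" using gconv[of u] u(3) P_D(2)[OF G]
      by (intro LIMSEQ_le_const[of "\<lambda>n. Gs (s n) (ereal u)"]) auto
    also have "g u \<le> g x" using gm u(2) by (simp add: mono_def)
    finally show ?thesis .
  qed
  have g1: "g x \<le> 1" for x
  proof -
    obtain u where u: "x < u" "u < x + 1" "u \<notin> {x. \<not> isCont g x}"
      using exists_notin_ctble[OF ctg, of x "x + 1"] by auto
    have "g x \<le> g u" using gm u(1) by (simp add: mono_def)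
    also have "g u \<le> 1" using gconv[of u] u(3) P_D(3)[OF G]
      by (intro LIMSEQ_le_const2[of "\<lambda>n. Gs (s n) (ereal u)"]) auto
    finally show ?thesis .
  qed
  have gneg: "g x \<le> 0" if "x \<le> 0" for x
  proof (rule left_lim_le_real[OF gl])
    fix y assume "y < x"
    then obtain u where u: "y < u" "u < x" "u \<notin> {x. \<not> isCont g x}"
      using exists_notin_ctble[OF ctg, of y x] by auto
    have "g y \<le> g u" using gm u(1) by (simp add: mono_def)
    also have "g u \<le> 0"
    proof -
      have "\<And>n. Gs (s n) (ereal u) = 0" using P_nonpos[OF G] u(2) that by simp
      thus ?thesis using gconv[of u] u(3)
        by (intro LIMSEQ_le_const2[of "\<lambda>n. Gs (s n) (ereal u)"]) auto
    qed
    finally show "g y \<le> 0" .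
  qed
  define Fe where "Fe t = (if t = \<infinity> then 1 else if t = -\<infinity> then 0 else g (real_of_ereal t))" for t
  have Fer: "(\<lambda>y. Fe (ereal y)) = g" unfolding Fe_def by auto
  have Fem: "mono Fe"
  proof (rule monoI)
    fix a b :: ereal assume ab: "a \<le> b"
    show "Fe a \<le> Fe b"
    proof (cases a)
      case (real x)
      show ?thesis
      proof (cases b)
        case (real y) thus ?thesis using \<open>a = ereal x\<close> ab gm by (simp add: Fe_def mono_def)
      qed (use real ab g1 g0 in \<open>auto simp: Fe_def\<close>)
    qed (use ab g1 g0 in \<open>auto simp: Fe_def\<close>)
  qed
  have FeP: "Fe \<in> P"
    unfolding Delta_plus_def distfun_def
  proof (intro CollectI conjI allI)
    show "mono Fe" by (rule Fem)
    show "0 \<le> Fe t" "Fe t \<le> 1" for t using g0 g1 by (auto simp: Fe_def)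
    show "continuous (at_left (ereal x)) Fe" for x
      unfolding cont_left_real Fer by (rule gl)
    show "Fe (-\<infinity>) = 0" "Fe \<infinity> = 1" by (auto simp: Fe_def)
    have "g 0 = 0" using g0[of 0] gneg[of 0] by simp
    thus "Fe 0 = 0" by (simp add: Fe_def)
  qed
  have "wconv (\<lambda>k. Gs (s k)) Fe"
  proof -
    have Fe_e: "\<And>y. Fe (ereal y) = g y" by (simp add: Fe_def)
    show ?thesis unfolding wconv_def Fe_e using gconv by blast
  qed
  thus ?thesis using s FeP by blast
qed

lemma sub_principle:
  fixes Gs :: "nat \<Rightarrow> dfun"
  assumes G: "\<And>n. Gs n \<in> P" and C: "C \<in> P"
    and h: "\<And>r F. strict_mono r \<Longrightarrow> F \<in> P \<Longrightarrow> wconv (\<lambda>k. Gs (r k)) F \<Longrightarrow> F = C"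
  shows "wconv Gs C"
  unfolding wconv_def
proof (intro allI impI)
  fix t assume ct: "isCont (fr C) t"
  show "(\<lambda>n. Gs n (ereal t)) \<longlonglongrightarrow> C (ereal t)"
  proof (rule LIMSEQ_I)
    fix e :: real assume e: "0 < e"
    show "\<exists>no. \<forall>n\<ge>no. norm (Gs n (ereal t) - C (ereal t)) < e"
    proof (rule ccontr)
      assume "\<not> (\<exists>no. \<forall>n\<ge>no. norm (Gs n (ereal t) - C (ereal t)) < e)"
      hence e2: "\<forall>N. \<exists>n\<ge>N. e \<le> norm (Gs n (ereal t) - C (ereal t))"
        by (simp add: not_less)
      define A where "A = {n. e \<le> norm (Gs n (ereal t) - C (ereal t))}"
      have "infinite A" unfolding infinite_nat_iff_unbounded_le A_def using e2 by simp
      from infinite_enumerate[OF this] obtain r :: "nat \<Rightarrow> nat" where r: "strict_mono r" "\<forall>n. r n \<in> A"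
        by blast
      have G': "\<And>k. Gs (r k) \<in> P" using G by blast
      from Helly_P[of "\<lambda>k. Gs (r k)", OF G'] obtain r' F where r': "strict_mono r'" "F \<in> P" "wconv (\<lambda>k. Gs (r (r' k))) F"
        by blast
      have "strict_mono (r \<circ> r')" using r(1) r'(1) by (rule strict_mono_o)
      hence "F = C" using h[of "r \<circ> r'" F] r'(2,3) by (simp add: o_def)
      hence "(\<lambda>k. Gs (r (r' k)) (ereal t)) \<longlonglongrightarrow> C (ereal t)"
        using r'(3) ct unfolding wconv_def by simp
      from LIMSEQ_D[OF this e] obtain N where N: "\<forall>k\<ge>N. norm (Gs (r (r' k)) (ereal t) - C (ereal t)) < e"
        by (elim exE)
      hence "norm (Gs (r (r' N)) (ereal t) - C (ereal t)) < e" by simp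
      moreover have "r (r' N) \<in> A" using r(2) by simp
      ultimately show False unfolding A_def by simp
    qed
  qed
qed

lemma conv_exists:
  fixes Gs :: "nat \<Rightarrow> dfun"
  assumes G: "\<And>n. Gs n \<in> P"
    and h: "\<And>r s F1 F2. strict_mono r \<Longrightarrow> strict_mono s \<Longrightarrow> F1 \<in> P \<Longrightarrow> F2 \<in> P
       \<Longrightarrow> wconv (\<lambda>k. Gs (r k)) F1 \<Longrightarrow> wconv (\<lambda>k. Gs (s k)) F2 \<Longrightarrow> F2 \<le> F1"
  shows "\<exists>F\<in>P. wconv Gs F"
proof -
  from Helly_P[of Gs, OF G] obtain r0 F0 where r0: "strict_mono r0" "F0 \<in> P" "wconv (\<lambda>k. Gs (r0 k)) F0"
    by blast
  have "wconv Gs F0"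
  proof (rule sub_principle[OF G r0(2)])
    fix r F assume a: "strict_mono r" "F \<in> P" "wconv (\<lambda>k. Gs (r k)) F"
    have 1: "F \<le> F0" by (rule h[OF r0(1) a(1) r0(2) a(2) r0(3) a(3)])
    have 2: "F0 \<le> F" by (rule h[OF a(1) r0(1) a(2) r0(2) a(3) r0(3)])
    show "F = F0" using 1 2 by (rule order.antisym)
  qed
  thus ?thesis using r0(2) by blast
qed

lemma wconv_lb:
  fixes Gs :: "nat \<Rightarrow> dfun"
  assumes F: "F \<in> P" and G: "\<And>n. Gs n \<in> P" and c: "wconv Gs F" and st: "s < t"
    and lb: "\<And>n. N \<le> n \<Longrightarrow> c \<le> Gs n (ereal s)"
  shows "c \<le> F (ereal t)"
proof -
  obtain u where u: "s < u" "u < t" "isCont (fr F) u" using exists_cont2[OF F F st] by blast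
  have "(\<lambda>n. Gs n (ereal u)) \<longlonglongrightarrow> F (ereal u)" using c u(3) unfolding wconv_def by blast
  moreover have "\<forall>n\<ge>N. c \<le> Gs n (ereal u)"
  proof (intro allI impI)
    fix n assume "N \<le> n"
    have "Gs n (ereal s) \<le> Gs n (ereal u)" using P_D(1)[OF G] u(1) by (simp add: mono_def)
    thus "c \<le> Gs n (ereal u)" using lb[OF \<open>N \<le> n\<close>] by linarith
  qed
  ultimately have "c \<le> F (ereal u)" by (intro LIMSEQ_le_const) blast+
  also have "F (ereal u) \<le> F (ereal t)" using P_D(1)[OF F] u(2) by (simp add: mono_def)
  finally show ?thesis .
qed

definition wlim :: "(nat \<Rightarrow> dfun) \<Rightarrow> dfun" where
  "wlim Gs = (SOME F. F \<in> P \<and> wconv Gs F)"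

lemma wlimI: assumes "F \<in> P" "wconv Gs F" shows "wlim Gs = F"
proof -
  have "wlim Gs \<in> P \<and> wconv Gs (wlim Gs)" unfolding wlim_def by (rule someI[of _ F]) (use assms in blast)
  thus ?thesis using wconv_unique assms by blast
qed

lemma dsup_upper:
  assumes "A \<subseteq> P" "F \<in> A" shows "F \<le> dsup A"
proof (rule le_funI)
  fix t
  show "F t \<le> dsup A t"
  proof (cases "t = \<infinity>")
    case True thus ?thesis using P_D(3) assms by (auto simp: dsup_def)
  next
    case False
    have "bdd_above (insert 0 ((\<lambda>F. F t) ` A))"
      using assms(1) P_D(3) by (intro bdd_aboveI[of _ 1]) auto
    hence "F t \<le> Sup (insert 0 ((\<lambda>F. F t) ` A))" using assms(2) by (intro cSup_upper) auto
    thus ?thesis using False by (simp add: dsup_def)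
  qed
qed

lemma dsup_le:
  assumes "L \<in> P" "\<And>F. F \<in> A \<Longrightarrow> F \<le> L" shows "dsup A \<le> L"
proof (rule le_funI)
  fix t
  show "dsup A t \<le> L t"
  proof (cases "t = \<infinity>")
    case True thus ?thesis using P_D(6)[OF assms(1)] by (simp add: dsup_def)
  next
    case False
    have "Sup (insert 0 ((\<lambda>F. F t) ` A)) \<le> L t"
      using assms P_D(2)[OF assms(1)] by (intro cSup_least) (auto simp: le_fun_def)
    thus ?thesis using False by (simp add: dsup_def)
  qed
qed

lemma dsup_props:
  assumes "A \<subseteq> P" shows "mono (dsup A)" "\<And>t. 0 \<le> dsup A t" "1 \<le> dsup A \<infinity>"
proof -
  have bdd: "bdd_above (insert 0 ((\<lambda>F. F t) ` A))" for t
    using assms P_D(3) by (intro bdd_aboveI[of _ 1]) auto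
  have le1: "Sup (insert 0 ((\<lambda>F. F t) ` A)) \<le> 1" for t
    using assms P_D(3) by (intro cSup_least) auto
  show "0 \<le> dsup A t" for t
  proof (cases "t = \<infinity>")
    case False thus ?thesis using bdd[of t] by (simp add: dsup_def cSup_upper)
  qed (simp add: dsup_def)
  show "1 \<le> dsup A \<infinity>" by (simp add: dsup_def)
  show "mono (dsup A)"
  proof (rule monoI)
    fix s t :: ereal assume st: "s \<le> t"
    show "dsup A s \<le> dsup A t"
    proof (cases "t = \<infinity>")
      case True thus ?thesis using le1[of s] by (simp add: dsup_def)
    next
      case False
      hence "s \<noteq> \<infinity>" using st by auto
      have "Sup (insert 0 ((\<lambda>F. F s) ` A)) \<le> Sup (insert 0 ((\<lambda>F. F t) ` A))"
      proof (rule cSup_least)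
        fix y assume "y \<in> insert 0 ((\<lambda>F. F s) ` A)"
        then consider "y = 0" | F where "F \<in> A" "y = F s" by blast
        thus "y \<le> Sup (insert 0 ((\<lambda>F. F t) ` A))"
        proof cases
          case 1 thus ?thesis using bdd[of t] by (simp add: cSup_upper)
        next
          case 2
          have "F s \<le> F t" using P_D(1) assms 2(1) st by (auto simp: mono_def)
          also have "F t \<le> Sup (insert 0 ((\<lambda>F. F t) ` A))" using bdd[of t] 2(1) by (intro cSup_upper) auto
          finally show ?thesis using 2(2) by simp
        qed
      qed simp
      thus ?thesis using False \<open>s \<noteq> \<infinity>\<close> by (simp add: dsup_def)
    qed
  qed
qed

locale tfc =
  fixes tf :: "dfun \<Rightarrow> dfun \<Rightarrow> dfun"
  assumes tri: "triangle_function tf" and tcont: "continuous_tf tf"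
begin

lemma tri_part1: "\<forall>F\<in>P. \<forall>L\<in>P. tf F L \<in> P"
  using tri unfolding triangle_function_def by (elim conjE) assumption
lemma tri_part2: "\<forall>F\<in>P. \<forall>L\<in>P. tf F L = tf L F"
  using tri unfolding triangle_function_def by (elim conjE) assumption
lemma tri_part3: "\<forall>F\<in>P. \<forall>L\<in>P. \<forall>M\<in>P. tf (tf F L) M = tf F (tf L M)"
  using tri unfolding triangle_function_def by (elim conjE) assumption
lemma tri_part4: "\<forall>F\<in>P. \<forall>F'\<in>P. \<forall>L\<in>P. F \<le> F' \<longrightarrow> tf F L \<le> tf F' L"
  using tri unfolding triangle_function_def by (elim conjE) assumption
lemma tri_part5: "\<forall>F\<in>P. \<forall>L\<in>P. \<forall>L'\<in>P. L \<le> L' \<longrightarrow> tf F L \<le> tf F L'"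
  using tri unfolding triangle_function_def by (elim conjE) assumption
lemma tri_part6: "\<forall>F\<in>P. tf F H0 = F"
  using tri unfolding triangle_function_def by (elim conjE) assumption
lemmas tri_parts = tri_part1 tri_part2 tri_part3 tri_part4 tri_part5 tri_part6

lemma tf_P: "F \<in> P \<Longrightarrow> L \<in> P \<Longrightarrow> tf F L \<in> P"
  using tri_parts(1) by (elim ballE) auto
lemma tf_comm: assumes "F \<in> P" "L \<in> P" shows "tf F L = tf L F"
  using tri_parts(2)[rule_format, OF assms] .
lemma tf_assoc: assumes "F \<in> P" "L \<in> P" "M \<in> P" shows "tf (tf F L) M = tf F (tf L M)"
  using tri_parts(3)[rule_format, OF assms] .
lemma tf_mono1: assumes "F \<in> P" "F' \<in> P" "L \<in> P" "F \<le> F'" shows "tf F L \<le> tf F' L"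
  using tri_parts(4)[rule_format, OF assms] .
lemma tf_mono2: assumes "F \<in> P" "L \<in> P" "L' \<in> P" "L \<le> L'" shows "tf F L \<le> tf F L'"
  using tri_parts(5)[rule_format, OF assms] .
lemma tf_H0: assumes "F \<in> P" shows "tf F H0 = F"
  using tri_parts(6)[rule_format, OF assms] .
lemma tf_H0': "F \<in> P \<Longrightarrow> tf H0 F = F"
proof -
  assume "F \<in> P"
  hence "tf H0 F = tf F H0" using tf_comm[OF H0_P] by blast
  thus ?thesis using tf_H0[OF \<open>F \<in> P\<close>] by simp
qed

lemma tf_mono: "F \<in> P \<Longrightarrow> F' \<in> P \<Longrightarrow> L \<in> P \<Longrightarrow> L' \<in> P \<Longrightarrow> F \<le> F' \<Longrightarrow> L \<le> L' \<Longrightarrow> tf F L \<le> tf F' L'"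
  using tf_mono1[of F F' L] tf_mono2[of F' L L'] by (rule order_trans) simp_all

lemma tf_le1: "F \<in> P \<Longrightarrow> L \<in> P \<Longrightarrow> tf F L \<le> F"
  using tf_mono2[of F L H0] P_le_H0[of L] H0_P tf_H0[of F] by simp

lemma tf_swap: assumes "X \<in> P" "Y \<in> P" "Z \<in> P" shows "tf (tf X Y) Z = tf (tf X Z) Y"
proof -
  have "tf (tf X Y) Z = tf X (tf Y Z)" by (rule tf_assoc[OF assms])
  also have "tf Y Z = tf Z Y" by (rule tf_comm[OF assms(2,3)])
  also have "tf X (tf Z Y) = tf (tf X Z) Y" by (rule tf_assoc[OF assms(1,3,2), symmetric])
  finally show ?thesis .
qed

lemma tf_wconv:
  fixes Fs Ls :: "nat \<Rightarrow> dfun"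
  assumes "\<And>n. Fs n \<in> P" "\<And>n. Ls n \<in> P" "F \<in> P" "L \<in> P" "wconv Fs F" "wconv Ls L"
  shows "wconv (\<lambda>n. tf (Fs n) (Ls n)) (tf F L)"
  using tcont assms unfolding continuous_tf_def by blast

lemma tf_wconv_H0:
  fixes Fs Ls :: "nat \<Rightarrow> dfun"
  assumes "\<And>n. Fs n \<in> P" "\<And>n. Ls n \<in> P" "wconv Fs H0" "wconv Ls H0"
  shows "wconv (\<lambda>n. tf (Fs n) (Ls n)) H0"
  using tf_wconv[OF assms(1,2) H0_P H0_P assms(3,4)] tf_H0[OF H0_P] by simp

lemma lim_exists:
  fixes Gs :: "nat \<Rightarrow> dfun" and E :: "nat \<Rightarrow> nat \<Rightarrow> dfun"
  assumes G: "\<And>n. Gs n \<in> P" and EP: "\<And>n p. E n p \<in> P"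
    and Ec: "\<And>r s. (\<forall>i. i \<le> r i \<and> i \<le> s i) \<Longrightarrow> wconv (\<lambda>i. E (r i) (s i)) H0"
    and ineq: "\<And>n p. tf (E n p) (Gs p) \<le> Gs n"
  shows "\<exists>F\<in>P. wconv Gs F"
proof (rule conv_exists[OF G])
  fix r s :: "nat \<Rightarrow> nat" and F1 F2
  assume r: "strict_mono r" and s: "strict_mono s" and F: "F1 \<in> P" "F2 \<in> P"
    and c1: "wconv (\<lambda>k. Gs (r k)) F1" and c2: "wconv (\<lambda>k. Gs (s k)) F2"
  have "\<forall>i. i \<le> r i \<and> i \<le> s i" using seq_suble[OF r] seq_suble[OF s] by blast
  hence e: "wconv (\<lambda>i. E (r i) (s i)) H0" by (rule Ec)
  have "wconv (\<lambda>i. tf (E (r i) (s i)) (Gs (s i))) (tf H0 F2)"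
    by (rule tf_wconv[OF _ _ H0_P F(2) e c2]) (auto intro: EP G)
  hence c3: "wconv (\<lambda>i. tf (E (r i) (s i)) (Gs (s i))) F2" using tf_H0'[OF F(2)] by simp
  show "F2 \<le> F1"
    by (rule wconv_le[OF F(2) F(1) c3 c1]) (use ineq in \<open>auto simp: le_fun_def\<close>)
qed

end

locale pms = tfc +
  fixes S :: "'a set" and D :: "'a \<Rightarrow> 'a \<Rightarrow> dfun"
  assumes pm: "pm_space S D tf"
begin

lemma pm_p1: "\<forall>p\<in>S. \<forall>q\<in>S. D p q \<in> P"
  using pm unfolding pm_space_def by (elim conjE) assumption
lemma pm_p2: "\<forall>p\<in>S. \<forall>q\<in>S. D p q = H0 \<longleftrightarrow> p = q"
  using pm unfolding pm_space_def by (elim conjE) assumption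
lemma pm_p3: "\<forall>p\<in>S. \<forall>q\<in>S. D p q = D q p"
  using pm unfolding pm_space_def by (elim conjE) assumption
lemma pm_p4: "\<forall>p\<in>S. \<forall>q\<in>S. \<forall>r\<in>S. tf (D p q) (D q r) \<le> D p r"
  using pm unfolding pm_space_def by (elim conjE) assumption

lemma DP: assumes "p \<in> S" "q \<in> S" shows "D p q \<in> P"
  using pm_p1[rule_format, OF assms] .
lemma Dsym: assumes "p \<in> S" "q \<in> S" shows "D p q = D q p"
  using pm_p3[rule_format, OF assms] .
lemma Dself: assumes "p \<in> S" shows "D p p = H0"
  using pm_p2[rule_format, OF assms assms] by simp
lemma Deq: assumes "p \<in> S" "q \<in> S" "D p q = H0" shows "p = q"
  using pm_p2[rule_format, OF assms(1,2)] assms(3) by simp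
lemma Dtri: assumes "p \<in> S" "q \<in> S" "r \<in> S" shows "tf (D p q) (D q r) \<le> D p r"
  using pm_p4[rule_format, OF assms] .

definition cseq :: "(nat \<Rightarrow> 'a) \<Rightarrow> bool" where
  "cseq a \<longleftrightarrow> (\<forall>n. a n \<in> S) \<and> pm_cauchy D a"

lemma cseq_S: "cseq a \<Longrightarrow> a n \<in> S"
  unfolding cseq_def by blast

lemma cseq_dcauchy: assumes "cseq a" shows "dcauchy (\<lambda>n p. D (a n) (a p))"
proof -
  have EP: "\<And>n p. D (a n) (a p) \<in> P" using DP cseq_S[OF assms] by blast
  have "pm_cauchy D a" using assms unfolding cseq_def by blast
  thus ?thesis using pm_cauchy_iff[of D a, OF EP] by simp
qed

lemma cseq_conv:
  assumes "cseq a" "\<forall>i. i \<le> r i \<and> i \<le> s i"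
  shows "wconv (\<lambda>i. D (a (r i)) (a (s i))) H0"
proof -
  have EP: "\<And>n p. D (a n) (a p) \<in> P" using DP cseq_S[OF assms(1)] by blast
  have "\<forall>r s. (\<forall>i. i \<le> r i \<and> i \<le> s i) \<longrightarrow> wconv (\<lambda>i. D (a (r i)) (a (s i))) H0"
    using cseq_dcauchy[OF assms(1)] dcauchy_iff[of "\<lambda>n p. D (a n) (a p)", OF EP] by simp
  thus ?thesis using assms(2) by blast
qed

lemma cseqI:
  assumes S: "\<And>n. a n \<in> S"
    and h: "\<And>r s. \<forall>i. i \<le> r i \<and> i \<le> s i \<Longrightarrow> wconv (\<lambda>i. D (a (r i)) (a (s i))) H0"
  shows "cseq a"
proof -
  have EP: "\<And>n p. D (a n) (a p) \<in> P" using DP S by blast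
  have "dcauchy (\<lambda>n p. D (a n) (a p))"
    using dcauchy_iff[of "\<lambda>n p. D (a n) (a p)", OF EP] h by blast
  hence "pm_cauchy D a" using pm_cauchy_iff[of D a, OF EP] by simp
  thus ?thesis unfolding cseq_def using S by blast
qed

lemma cseq_const: assumes "c \<in> S" shows "cseq (\<lambda>n. c)"
  by (rule cseqI) (use assms Dself wconv_const in auto)

definition mk :: "(nat \<Rightarrow> 'a) \<Rightarrow> 'a \<Rightarrow> dfun" where
  "mk a = (\<lambda>x. if x \<in> S then wlim (\<lambda>n. D (a n) x) else undefined)"

lemma mk_conv:
  assumes a: "cseq a" and x: "x \<in> S"
  shows "mk a x \<in> P" "wconv (\<lambda>n. D (a n) x) (mk a x)"
proof -
  have G: "\<And>n. D (a n) x \<in> P" using DP cseq_S[OF a] x by blast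
  have EP: "\<And>n p. D (a n) (a p) \<in> P" using DP cseq_S[OF a] by blast
  have ineq: "\<And>n p. tf (D (a n) (a p)) (D (a p) x) \<le> D (a n) x"
    using Dtri cseq_S[OF a] x by blast
  obtain F where F: "F \<in> P" "wconv (\<lambda>n. D (a n) x) F"
    using lim_exists[of "\<lambda>n. D (a n) x" "\<lambda>n p. D (a n) (a p)", OF G EP cseq_conv[OF a] ineq] by blast
  have "mk a x = F" unfolding mk_def using x wlimI[OF F] by simp
  thus "mk a x \<in> P" "wconv (\<lambda>n. D (a n) x) (mk a x)" using F by simp_all
qed

lemma mk_undef: "x \<notin> S \<Longrightarrow> mk a x = undefined"
  unfolding mk_def by simp

lemma mk_lip:
  assumes a: "cseq a" and x: "x \<in> S" and y: "y \<in> S"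
  shows "tf (D x y) (mk a y) \<le> mk a x"
proof -
  have aS: "\<And>n. a n \<in> S" using cseq_S[OF a] .
  have c1: "wconv (\<lambda>n. tf (D x y) (D (a n) y)) (tf (D x y) (mk a y))"
    by (rule tf_wconv[OF _ _ DP[OF x y] mk_conv(1)[OF a y] wconv_const mk_conv(2)[OF a y]])
       (use DP aS x y in auto)
  have le: "tf (D x y) (D (a n) y) \<le> D (a n) x" for n
  proof -
    have "tf (D x y) (D (a n) y) = tf (D (a n) y) (D y x)"
      using tf_comm[OF DP[OF x y] DP[OF aS y]] Dsym[OF x y] by simp
    also have "\<dots> \<le> D (a n) x" by (rule Dtri[OF aS y x])
    finally show ?thesis .
  qed
  show ?thesis
    by (rule wconv_le[OF tf_P[OF DP[OF x y] mk_conv(1)[OF a y]] mk_conv(1)[OF a x] c1 mk_conv(2)[OF a x]])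
       (use le in \<open>auto simp: le_fun_def\<close>)
qed

lemma mk_PiG: assumes a: "cseq a" shows "mk a \<in> PiG S D tf"
  unfolding PiG_def prob_lipschitz_def
proof (intro CollectI conjI ballI allI impI)
  show "\<And>x. x \<notin> S \<Longrightarrow> mk a x = undefined" by (rule mk_undef)
  show "\<And>x. x \<in> S \<Longrightarrow> mk a x \<in> P" by (rule mk_conv(1)[OF a])
  show "\<And>x y. x \<in> S \<Longrightarrow> y \<in> S \<Longrightarrow> tf (D x y) (mk a y) \<le> mk a x" by (rule mk_lip[OF a])
  have "range a \<subseteq> S" "pm_cauchy D a" using a unfolding cseq_def by auto
  moreover have "\<forall>x\<in>S. wconv (\<lambda>n. D (a n) x) (mk a x)" using mk_conv(2)[OF a] by blast
  ultimately show "\<exists>b. range b \<subseteq> S \<and> pm_cauchy D b \<and> (\<forall>x\<in>S. wconv (\<lambda>n. D (b n) x) (mk a x))"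
    by blast
qed

lemma PiG_mk: assumes f: "f \<in> PiG S D tf" obtains a where "cseq a" "f = mk a"
proof -
  from f obtain a where a: "range a \<subseteq> S" "pm_cauchy D a" "\<forall>x\<in>S. wconv (\<lambda>n. D (a n) x) (f x)"
    and und: "\<forall>x. x \<notin> S \<longrightarrow> f x = undefined" and fP: "\<forall>x\<in>S. f x \<in> P"
    unfolding PiG_def prob_lipschitz_def by blast
  have ca: "cseq a" unfolding cseq_def using a by blast
  have "f = mk a"
  proof (rule ext)
    fix x show "f x = mk a x"
    proof (cases "x \<in> S")
      case True
      show ?thesis by (rule wconv_unique[OF _ mk_conv(1)[OF ca True] _ mk_conv(2)[OF ca True]])
                      (use True fP a(3) in auto)
    qed (use und mk_undef in auto)
  qed
  thus ?thesis using that ca by blast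
qed

lemma PiG_P: "f \<in> PiG S D tf \<Longrightarrow> x \<in> S \<Longrightarrow> f x \<in> P"
  unfolding PiG_def prob_lipschitz_def by blast

lemma fa_H0: assumes a: "cseq a" shows "wconv (\<lambda>m. mk a (a m)) H0"
proof -
  have aS: "\<And>n. a n \<in> S" using cseq_S[OF a] .
  have FP: "\<And>m. mk a (a m) \<in> P" using mk_conv(1)[OF a aS] .
  show ?thesis unfolding wconv_H0_iff2[of "\<lambda>m. mk a (a m)", OF FP]
  proof (intro allI impI)
    fix t e :: real assume t: "0 < t" and e: "0 < e"
    have "\<forall>t>0. \<forall>e>0. \<exists>N. \<forall>n\<ge>N. \<forall>p\<ge>N. 1 - e < D (a n) (a p) (ereal t)"
      using cseq_dcauchy[OF a] unfolding dcauchy_def .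
    then obtain N where N: "\<forall>n\<ge>N. \<forall>p\<ge>N. 1 - e / 2 < D (a n) (a p) (ereal (t / 2))"
      using t e by (meson half_gt_zero)
    show "\<exists>N. \<forall>n\<ge>N. 1 - e < mk a (a n) (ereal t)"
    proof (rule exI[of _ N], intro allI impI)
      fix m assume m: "N \<le> m"
      have "1 - e / 2 \<le> mk a (a m) (ereal t)"
      proof (rule wconv_lb[OF FP _ mk_conv(2)[OF a aS]])
        show "\<And>n. D (a n) (a m) \<in> P" using DP aS by blast
        show "t / 2 < t" using t by simp
        show "\<And>n. N \<le> n \<Longrightarrow> 1 - e / 2 \<le> D (a n) (a m) (ereal (t / 2))"
          using N m by (meson less_imp_le)
      qed
      thus "1 - e < mk a (a m) (ereal t)" using e by linarith
    qed
  qed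
qed

end

context pms
begin

lemma DD_mk:
  assumes a: "cseq a" and b: "cseq b"
  shows "DD S tf (mk a) (mk b) \<in> P" "wconv (\<lambda>n. D (a n) (b n)) (DD S tf (mk a) (mk b))"
proof -
  have aS: "\<And>n. a n \<in> S" using cseq_S[OF a] .
  have bS: "\<And>n. b n \<in> S" using cseq_S[OF b] .
  have G: "\<And>n. D (a n) (b n) \<in> P" using DP aS bS by blast
  define E where "E n p = tf (D (a n) (a p)) (D (b p) (b n))" for n p
  have EP: "\<And>n p. E n p \<in> P" unfolding E_def using tf_P DP aS bS by blast
  have Ec: "wconv (\<lambda>i. E (r i) (s i)) H0" if rs: "\<forall>i. i \<le> r i \<and> i \<le> s i" for r s
  proof -
    have 1: "wconv (\<lambda>i. D (a (r i)) (a (s i))) H0" by (rule cseq_conv[OF a rs])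
    have rs': "\<forall>i. i \<le> s i \<and> i \<le> r i" using rs by blast
    have 2: "wconv (\<lambda>i. D (b (s i)) (b (r i))) H0" by (rule cseq_conv[OF b rs'])
    show ?thesis unfolding E_def by (rule tf_wconv_H0[OF _ _ 1 2]) (use DP aS bS in auto)
  qed
  have ineq: "tf (E n p) (D (a p) (b p)) \<le> D (a n) (b n)" for n p
  proof -
    have "tf (E n p) (D (a p) (b p)) = tf (tf (D (a n) (a p)) (D (a p) (b p))) (D (b p) (b n))"
      unfolding E_def by (rule tf_swap[symmetric]) (use DP aS bS in auto)
    also have "\<dots> \<le> tf (D (a n) (b p)) (D (b p) (b n))"
      by (rule tf_mono1) (use DP aS bS tf_P Dtri in auto)
    also have "\<dots> \<le> D (a n) (b n)" by (rule Dtri) (use aS bS in auto)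
    finally show ?thesis .
  qed
  obtain L where L: "L \<in> P" "wconv (\<lambda>n. D (a n) (b n)) L"
    using lim_exists[of "\<lambda>n. D (a n) (b n)" E, OF G EP Ec ineq] by blast
  define A where "A = {tf (mk a x) (mk b x) |x. x \<in> S}"
  have AP: "A \<subseteq> P" unfolding A_def using tf_P mk_conv(1)[OF a] mk_conv(1)[OF b] by blast
  have DDA: "DD S tf (mk a) (mk b) = dsup A" unfolding DD_def A_def by simp
  have up: "dsup A \<le> L"
  proof (rule dsup_le[OF L(1)])
    fix F assume "F \<in> A"
    then obtain x where x: "x \<in> S" "F = tf (mk a x) (mk b x)" unfolding A_def by blast
    have c: "wconv (\<lambda>n. tf (D (a n) x) (D (b n) x)) (tf (mk a x) (mk b x))"
      by (rule tf_wconv[OF _ _ mk_conv(1)[OF a x(1)] mk_conv(1)[OF b x(1)] mk_conv(2)[OF a x(1)] mk_conv(2)[OF b x(1)]])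
         (use DP aS bS x in auto)
    have le: "tf (D (a n) x) (D (b n) x) \<le> D (a n) (b n)" for n
      using Dtri[OF aS x(1) bS] Dsym[OF bS x(1)] by simp
    have "tf (mk a x) (mk b x) \<le> L"
      by (rule wconv_le[OF tf_P[OF mk_conv(1)[OF a x(1)] mk_conv(1)[OF b x(1)]] L(1) c L(2)])
         (use le in \<open>auto simp: le_fun_def\<close>)
    thus "F \<le> L" using x(2) by simp
  qed
  have low: "L \<le> dsup A"
  proof -
    define Q where "Q m = tf (tf (mk a (a m)) (D (a m) (b m))) (mk b (b m))" for m
    have mkaP: "\<And>m y. y \<in> S \<Longrightarrow> mk a y \<in> P" using mk_conv(1)[OF a] by blast
    have mkbP: "\<And>m y. y \<in> S \<Longrightarrow> mk b y \<in> P" using mk_conv(1)[OF b] by blast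
    have c1: "wconv (\<lambda>m. tf (mk a (a m)) (D (a m) (b m))) (tf H0 L)"
      by (rule tf_wconv[OF _ _ H0_P L(1) fa_H0[OF a] L(2)]) (use mkaP aS G in auto)
    have cQ: "wconv Q (tf (tf H0 L) H0)" unfolding Q_def
      by (rule tf_wconv[OF _ _ tf_P[OF H0_P L(1)] H0_P c1 fa_H0[OF b]])
         (use mkaP mkbP aS bS G tf_P in auto)
    have QL: "tf (tf H0 L) H0 = L" using tf_H0' tf_H0 L(1) tf_P[OF H0_P L(1)] by simp
    have QA: "Q m \<le> dsup A" for m
    proof -
      have "tf (mk a (a m)) (D (a m) (b m)) = tf (D (b m) (a m)) (mk a (a m))"
        using tf_comm[OF mkaP[OF aS] G] Dsym[OF aS bS] by simp
      also have "\<dots> \<le> mk a (b m)" by (rule mk_lip[OF a bS aS])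
      finally have "tf (mk a (a m)) (D (a m) (b m)) \<le> mk a (b m)" .
      hence "Q m \<le> tf (mk a (b m)) (mk b (b m))" unfolding Q_def
        by (intro tf_mono1) (use mkaP mkbP aS bS G tf_P in auto)
      also have "tf (mk a (b m)) (mk b (b m)) \<in> A" unfolding A_def using bS by blast
      hence "tf (mk a (b m)) (mk b (b m)) \<le> dsup A" by (rule dsup_upper[OF AP])
      finally show ?thesis .
    qed
    show ?thesis
      by (rule wconv_le_mono[OF L(1) _ QA dsup_props[OF AP]]) (use cQ QL in simp)
  qed
  have eq: "DD S tf (mk a) (mk b) = L" using up low DDA by simp
  show "DD S tf (mk a) (mk b) \<in> P" "wconv (\<lambda>n. D (a n) (b n)) (DD S tf (mk a) (mk b))"
    using eq L by simp_all
qed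

lemma DD_lim:
  assumes a: "cseq a" and b: "cseq b" and L: "L \<in> P" "wconv (\<lambda>n. D (a n) (b n)) L"
  shows "DD S tf (mk a) (mk b) = L"
  using wconv_unique[OF DD_mk(1)[OF a b] L(1) DD_mk(2)[OF a b] L(2)] .

lemma DD_sym_mk:
  assumes a: "cseq a" and b: "cseq b"
  shows "DD S tf (mk a) (mk b) = DD S tf (mk b) (mk a)"
proof -
  have "(\<lambda>n. D (b n) (a n)) = (\<lambda>n. D (a n) (b n))"
    using Dsym cseq_S[OF a] cseq_S[OF b] by auto
  hence w: "wconv (\<lambda>n. D (b n) (a n)) (DD S tf (mk a) (mk b))" using DD_mk(2)[OF a b] by simp
  show ?thesis using DD_lim[OF b a DD_mk(1)[OF a b] w] by simp
qed

lemma delta_mk: assumes c: "c \<in> S" shows "delta S D c = mk (\<lambda>n. c)"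
proof (rule ext)
  fix x show "delta S D c x = mk (\<lambda>n. c) x"
  proof (cases "x \<in> S")
    case True
    have "D c x = mk (\<lambda>n. c) x"
      by (rule wconv_unique[OF DP[OF c True] mk_conv(1)[OF cseq_const[OF c] True] wconv_const
            mk_conv(2)[OF cseq_const[OF c] True]])
    thus ?thesis using True Dsym[OF c True] by (simp add: delta_def)
  qed (simp add: delta_def mk_undef)
qed

lemma delta_PiG: "c \<in> S \<Longrightarrow> delta S D c \<in> PiG S D tf"
  using delta_mk mk_PiG cseq_const by simp

lemma DD_delta: assumes "p \<in> S" "q \<in> S" shows "DD S tf (delta S D p) (delta S D q) = D p q"
  unfolding delta_mk[OF assms(1)] delta_mk[OF assms(2)]
  by (rule DD_lim[OF cseq_const[OF assms(1)] cseq_const[OF assms(2)] DP[OF assms] wconv_const])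

lemma DD_delta_mk: assumes a: "cseq a" and c: "c \<in> S"
  shows "DD S tf (delta S D c) (mk a) = mk a c"
proof -
  have "(\<lambda>n. D c (a n)) = (\<lambda>n. D (a n) c)" using Dsym cseq_S[OF a] c by auto
  hence "wconv (\<lambda>n. D c (a n)) (mk a c)" using mk_conv(2)[OF a c] by simp
  thus ?thesis unfolding delta_mk[OF c]
    by (rule DD_lim[OF cseq_const[OF c] a mk_conv(1)[OF a c]])
qed

lemma PiG_pm_space: "pm_space (PiG S D tf) (DD S tf) tf"
  unfolding pm_space_def
proof (intro conjI ballI)
  show "triangle_function tf" by (rule tri)
  fix p q assume p: "p \<in> PiG S D tf" and q: "q \<in> PiG S D tf"
  obtain a where a: "cseq a" "p = mk a" using PiG_mk[OF p] by blast
  obtain b where b: "cseq b" "q = mk b" using PiG_mk[OF q] by blast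
  show "DD S tf p q \<in> P" using DD_mk(1)[OF a(1) b(1)] a(2) b(2) by simp
  show "DD S tf p q = DD S tf q p" using DD_sym_mk[OF a(1) b(1)] a(2) b(2) by simp
  show "DD S tf p q = H0 \<longleftrightarrow> p = q"
  proof
    assume "p = q"
    have "(\<lambda>n. D (a n) (a n)) = (\<lambda>n. H0)" using Dself cseq_S[OF a(1)] by auto
    hence "wconv (\<lambda>n. D (a n) (a n)) H0" using wconv_const by simp
    hence "DD S tf (mk a) (mk a) = H0" by (rule DD_lim[OF a(1) a(1) H0_P])
    thus "DD S tf p q = H0" using \<open>p = q\<close> a(2) by simp
  next
    assume h: "DD S tf p q = H0"
    have le: "mk c x \<le> mk d x"
      if c: "cseq c" and d: "cseq d" and cd: "DD S tf (mk d) (mk c) = H0" and x: "x \<in> S" for c d x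
    proof -
      have cS: "\<And>n. c n \<in> S" using cseq_S[OF c] .
      have dS: "\<And>n. d n \<in> S" using cseq_S[OF d] .
      have w: "wconv (\<lambda>n. D (d n) (c n)) H0" using DD_mk(2)[OF d c] cd by simp
      have c1: "wconv (\<lambda>n. tf (D (d n) (c n)) (D (c n) x)) (tf H0 (mk c x))"
        by (rule tf_wconv[OF _ _ H0_P mk_conv(1)[OF c x] w mk_conv(2)[OF c x]]) (use DP cS dS x in auto)
      have "tf H0 (mk c x) = mk c x" using tf_H0'[OF mk_conv(1)[OF c x]] .
      hence c2: "wconv (\<lambda>n. tf (D (d n) (c n)) (D (c n) x)) (mk c x)" using c1 by simp
      show ?thesis
        by (rule wconv_le[OF mk_conv(1)[OF c x] mk_conv(1)[OF d x] c2 mk_conv(2)[OF d x]])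
           (use Dtri[OF dS cS x] in \<open>auto simp: le_fun_def\<close>)
    qed
    have h1: "DD S tf (mk a) (mk b) = H0" using h a(2) b(2) by simp
    have h2: "DD S tf (mk b) (mk a) = H0" using h1 DD_sym_mk[OF a(1) b(1)] by simp
    have "mk a = mk b"
    proof (rule ext)
      fix x show "mk a x = mk b x"
      proof (cases "x \<in> S")
        case True
        show ?thesis using le[OF a(1) b(1) h2 True] le[OF b(1) a(1) h1 True] by (rule order.antisym)
      qed (simp add: mk_undef)
    qed
    thus "p = q" using a(2) b(2) by simp
  qed
next
  fix p q r assume p: "p \<in> PiG S D tf" and q: "q \<in> PiG S D tf" and r: "r \<in> PiG S D tf"
  obtain a where a: "cseq a" "p = mk a" using PiG_mk[OF p] by blast
  obtain b where b: "cseq b" "q = mk b" using PiG_mk[OF q] by blast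
  obtain c where c: "cseq c" "r = mk c" using PiG_mk[OF r] by blast
  have aS: "\<And>n. a n \<in> S" using cseq_S[OF a(1)] .
  have bS: "\<And>n. b n \<in> S" using cseq_S[OF b(1)] .
  have cS: "\<And>n. c n \<in> S" using cseq_S[OF c(1)] .
  have c1: "wconv (\<lambda>n. tf (D (a n) (b n)) (D (b n) (c n))) (tf (DD S tf (mk a) (mk b)) (DD S tf (mk b) (mk c)))"
    by (rule tf_wconv[OF _ _ DD_mk(1)[OF a(1) b(1)] DD_mk(1)[OF b(1) c(1)] DD_mk(2)[OF a(1) b(1)] DD_mk(2)[OF b(1) c(1)]])
       (use DP aS bS cS in auto)
  have "tf (DD S tf (mk a) (mk b)) (DD S tf (mk b) (mk c)) \<le> DD S tf (mk a) (mk c)"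
    by (rule wconv_le[OF tf_P[OF DD_mk(1)[OF a(1) b(1)] DD_mk(1)[OF b(1) c(1)]] DD_mk(1)[OF a(1) c(1)] c1 DD_mk(2)[OF a(1) c(1)]])
       (use Dtri[OF aS bS cS] in \<open>auto simp: le_fun_def\<close>)
  thus "tf (DD S tf p q) (DD S tf q r) \<le> DD S tf p r" using a(2) b(2) c(2) by simp
qed

end

context pms
begin

lemma PiG_mk_ex: "f \<in> PiG S D tf \<Longrightarrow> \<exists>a. cseq a \<and> f = mk a"
  using PiG_mk by blast

lemma conv_unique:
  assumes zS: "\<And>n. z n \<in> S" and x: "x \<in> S" and y: "y \<in> S"
    and cx: "pm_converges D z x" and cy: "pm_converges D z y"
  shows "x = y"
proof -
  have wx: "wconv (\<lambda>n. D x (z n)) H0"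
  proof -
    have "(\<lambda>n. D x (z n)) = (\<lambda>n. D (z n) x)" using Dsym zS x by auto
    thus ?thesis using cx unfolding pm_converges_def by simp
  qed
  have wy: "wconv (\<lambda>n. D (z n) y) H0" using cy unfolding pm_converges_def .
  have c: "wconv (\<lambda>n. tf (D x (z n)) (D (z n) y)) H0"
    by (rule tf_wconv_H0[OF _ _ wx wy]) (use DP zS x y in auto)
  have "H0 \<le> D x y"
    by (rule wconv_le[OF H0_P DP[OF x y] c wconv_const]) (use Dtri[OF x zS y] in \<open>auto simp: le_fun_def\<close>)
  hence "D x y = H0" using P_le_H0[OF DP[OF x y]] by (rule order.antisym[rotated])
  thus ?thesis by (rule Deq[OF x y])
qed

lemma conv_cseq:
  assumes zS: "\<And>n. z n \<in> S" and x: "x \<in> S" and cx: "pm_converges D z x"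
  shows "cseq z"
proof (rule cseqI[OF zS])
  fix r s :: "nat \<Rightarrow> nat" assume rs: "\<forall>i. i \<le> r i \<and> i \<le> s i"
  have w: "wconv (\<lambda>n. D (z n) x) H0" using cx unfolding pm_converges_def .
  have w1: "wconv (\<lambda>i. D (z (r i)) x) H0" using wconv_compose_ge[OF w] rs by blast
  have w2': "wconv (\<lambda>i. D (z (s i)) x) H0" using wconv_compose_ge[OF w] rs by blast
  have "(\<lambda>i. D x (z (s i))) = (\<lambda>i. D (z (s i)) x)" using Dsym zS x by auto
  hence w2: "wconv (\<lambda>i. D x (z (s i))) H0" using w2' by simp
  have c: "wconv (\<lambda>i. tf (D (z (r i)) x) (D x (z (s i)))) H0"
    by (rule tf_wconv_H0[OF _ _ w1 w2]) (use DP zS x in auto)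
  show "wconv (\<lambda>i. D (z (r i)) (z (s i))) H0"
    by (rule wconv_H0_ge[OF _ _ c]) (use DP zS x tf_P Dtri in auto)
qed

lemma lim_dist:
  assumes zS: "\<And>n. z n \<in> S" and wS: "\<And>n. w n \<in> S" and x: "x \<in> S" and y: "y \<in> S"
    and cz: "pm_converges D z x" and cw: "pm_converges D w y"
  shows "wconv (\<lambda>n. D (z n) (w n)) (D x y)"
proof (rule sub_principle[OF _ DP[OF x y]])
  show "\<And>n. D (z n) (w n) \<in> P" using DP zS wS by blast
  fix r :: "nat \<Rightarrow> nat" and F assume r: "strict_mono r" and F: "F \<in> P"
    and cF: "wconv (\<lambda>k. D (z (r k)) (w (r k))) F"
  have ge: "\<And>i. i \<le> r i" using seq_suble[OF r] .
  have a1: "wconv (\<lambda>k. D (z (r k)) x) H0"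
    using wconv_compose_ge[OF cz[unfolded pm_converges_def] ge] .
  have a2: "wconv (\<lambda>k. D (w (r k)) y) H0"
    using wconv_compose_ge[OF cw[unfolded pm_converges_def] ge] .
  have "(\<lambda>k. D x (z (r k))) = (\<lambda>k. D (z (r k)) x)" using Dsym zS x by auto
  hence a1': "wconv (\<lambda>k. D x (z (r k))) H0" using a1 by simp
  have "(\<lambda>k. D y (w (r k))) = (\<lambda>k. D (w (r k)) y)" using Dsym wS y by auto
  hence a2': "wconv (\<lambda>k. D y (w (r k))) H0" using a2 by simp
  have Dxy: "D x y \<in> P" using DP[OF x y] .
  have HP: "tf (tf H0 F) H0 = F" using tf_H0' tf_H0 F tf_P[OF H0_P F] by simp
  have HD: "tf (tf H0 (D x y)) H0 = D x y" using tf_H0' tf_H0 Dxy tf_P[OF H0_P Dxy] by simp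
  have c1: "wconv (\<lambda>k. tf (tf (D (z (r k)) x) (D x y)) (D y (w (r k)))) (D x y)"
  proof -
    have "wconv (\<lambda>k. tf (tf (D (z (r k)) x) (D x y)) (D y (w (r k)))) (tf (tf H0 (D x y)) H0)"
      by (rule tf_wconv[OF _ _ tf_P[OF H0_P Dxy] H0_P tf_wconv[OF _ _ H0_P Dxy a1 wconv_const] a2'])
         (use DP zS wS x y tf_P in auto)
    thus ?thesis using HD by simp
  qed
  have l1: "D x y \<le> F"
  proof (rule wconv_le[OF Dxy F c1 cF])
    fix n t
    have "tf (tf (D (z (r n)) x) (D x y)) (D y (w (r n))) \<le> tf (D (z (r n)) y) (D y (w (r n)))"
      by (rule tf_mono1) (use DP zS wS x y tf_P Dtri in auto)
    also have "\<dots> \<le> D (z (r n)) (w (r n))" by (rule Dtri) (use zS wS y in auto)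
    finally show "tf (tf (D (z (r n)) x) (D x y)) (D y (w (r n))) t \<le> D (z (r n)) (w (r n)) t"
      by (simp add: le_fun_def)
  qed
  have c2: "wconv (\<lambda>k. tf (tf (D x (z (r k))) (D (z (r k)) (w (r k)))) (D (w (r k)) y)) F"
  proof -
    have "wconv (\<lambda>k. tf (tf (D x (z (r k))) (D (z (r k)) (w (r k)))) (D (w (r k)) y)) (tf (tf H0 F) H0)"
      by (rule tf_wconv[OF _ _ tf_P[OF H0_P F] H0_P tf_wconv[OF _ _ H0_P F a1' cF] a2])
         (use DP zS wS x y tf_P in auto)
    thus ?thesis using HP by simp
  qed
  have l2: "F \<le> D x y"
  proof (rule wconv_le[OF F Dxy c2 wconv_const])
    fix n t
    have "tf (tf (D x (z (r n))) (D (z (r n)) (w (r n)))) (D (w (r n)) y) \<le> tf (D x (w (r n))) (D (w (r n)) y)"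
      by (rule tf_mono1) (use DP zS wS x y tf_P Dtri in auto)
    also have "\<dots> \<le> D x y" by (rule Dtri) (use wS x y in auto)
    finally show "tf (tf (D x (z (r n))) (D (z (r n)) (w (r n)))) (D (w (r n)) y) t \<le> D x y t"
      by (simp add: le_fun_def)
  qed
  show "F = D x y" using l2 l1 by (rule order.antisym)
qed

lemma PiG_pms: "pms tf (PiG S D tf) (DD S tf)"
  by (rule pms.intro[OF tfc_axioms]) (unfold pms_axioms_def, rule PiG_pm_space)

lemma PiG_complete: "pm_complete (PiG S D tf) (DD S tf)"
  unfolding pm_complete_def
proof (intro allI impI)
  interpret PI: pms tf "PiG S D tf" "DD S tf" by (rule PiG_pms)
  fix z assume "range z \<subseteq> PiG S D tf \<and> pm_cauchy (DD S tf) z"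
  hence zS: "\<And>k. z k \<in> PiG S D tf" and zc: "pm_cauchy (DD S tf) z" by auto
  have cz: "PI.cseq z" unfolding PI.cseq_def using zS zc by blast
  have "\<forall>k. \<exists>a. cseq a \<and> z k = mk a" using PiG_mk_ex zS by blast
  from choice[OF this] obtain A where A0: "\<forall>k. cseq (A k) \<and> z k = mk (A k)" ..
  have A: "\<And>k. cseq (A k)" "\<And>k. z k = mk (A k)" using A0 by simp_all
  have "\<forall>k. \<exists>n. 1 - 1 / (real k + 1) < DD S tf (delta S D (A k n)) (z k) (ereal (1 / (real k + 1)))"
  proof
    fix k
    have AS: "\<And>n. A k n \<in> S" using cseq_S[OF A(1)] .
    have eq: "DD S tf (delta S D (A k n)) (z k) = mk (A k) (A k n)" for n
      using DD_delta_mk[OF A(1) AS] A(2) by simp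
    have FP: "\<And>n. mk (A k) (A k n) \<in> P" using mk_conv(1)[OF A(1) AS] .
    have "\<forall>t>0. \<forall>e>0. \<exists>N. \<forall>n\<ge>N. 1 - e < mk (A k) (A k n) (ereal t)"
      using fa_H0[OF A(1)] wconv_H0_iff2[of "\<lambda>n. mk (A k) (A k n)", OF FP] by simp
    moreover have "(0::real) < 1 / (real k + 1)" by simp
    ultimately obtain N where "\<forall>n\<ge>N. 1 - 1 / (real k + 1) < mk (A k) (A k n) (ereal (1 / (real k + 1)))"
      by blast
    hence "1 - 1 / (real k + 1) < mk (A k) (A k N) (ereal (1 / (real k + 1)))" by simp
    thus "\<exists>n. 1 - 1 / (real k + 1) < DD S tf (delta S D (A k n)) (z k) (ereal (1 / (real k + 1)))"
      using eq by auto
  qed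
  from choice[OF this] obtain nk where
    nk0: "\<forall>k. 1 - 1 / (real k + 1) < DD S tf (delta S D (A k (nk k))) (z k) (ereal (1 / (real k + 1)))"
    ..
  have nk: "\<And>k. 1 - 1 / (real k + 1) < DD S tf (delta S D (A k (nk k))) (z k) (ereal (1 / (real k + 1)))"
    using nk0 by blast
  define b where "b k = A k (nk k)" for k
  have bS: "\<And>k. b k \<in> S" unfolding b_def using cseq_S[OF A(1)] by blast
  define H where "H k = DD S tf (delta S D (b k)) (z k)" for k
  have HP: "\<And>k. H k \<in> P" unfolding H_def using PI.DP delta_PiG bS zS by blast
  have Hc: "wconv H H0" unfolding wconv_H0_iff2[of H, OF HP]
  proof (intro allI impI)
    fix t e :: real assume t: "0 < t" and e: "0 < e"
    obtain N where N: "inverse (real (Suc N)) < min t e"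
      using reals_Archimedean[of "min t e"] t e by auto
    show "\<exists>N. \<forall>k\<ge>N. 1 - e < H k (ereal t)"
    proof (rule exI[of _ N], intro allI impI)
      fix k assume k: "N \<le> k"
      have "1 / (real k + 1) \<le> inverse (real (Suc N))"
        using k by (simp add: divide_simps)
      hence le: "1 / (real k + 1) < t" "1 / (real k + 1) < e" using N by auto
      have "H k (ereal (1 / (real k + 1))) \<le> H k (ereal t)"
        using P_D(1)[OF HP] le(1) by (simp add: mono_def)
      moreover have "1 - 1 / (real k + 1) < H k (ereal (1 / (real k + 1)))"
        using nk[of k] unfolding H_def b_def .
      ultimately show "1 - e < H k (ereal t)" using le(2) by linarith
    qed
  qed
  have dS: "\<And>k. delta S D (b k) \<in> PiG S D tf" using delta_PiG bS by blast
  have cb: "cseq b"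
  proof (rule cseqI[OF bS])
    fix r s :: "nat \<Rightarrow> nat" assume rs: "\<forall>i. i \<le> r i \<and> i \<le> s i"
    have h1: "wconv (\<lambda>i. H (r i)) H0" using wconv_compose_ge[OF Hc] rs by blast
    have h2: "wconv (\<lambda>i. H (s i)) H0" using wconv_compose_ge[OF Hc] rs by blast
    have h3: "wconv (\<lambda>i. DD S tf (z (r i)) (z (s i))) H0" by (rule PI.cseq_conv[OF cz rs])
    have p1: "\<And>i. H (r i) \<in> P" "\<And>i. H (s i) \<in> P" using HP by blast+
    have p2: "\<And>i. DD S tf (z (r i)) (z (s i)) \<in> P" using PI.DP zS by blast
    have p3: "\<And>i. tf (H (r i)) (DD S tf (z (r i)) (z (s i))) \<in> P" using tf_P p1 p2 by blast
    have c: "wconv (\<lambda>i. tf (tf (H (r i)) (DD S tf (z (r i)) (z (s i)))) (H (s i))) H0"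
      by (rule tf_wconv_H0[OF p3 p1(2) tf_wconv_H0[OF p1(1) p2 h1 h3] h2])
    show "wconv (\<lambda>i. D (b (r i)) (b (s i))) H0"
    proof (rule wconv_H0_ge[OF _ _ c])
      show "\<And>i. D (b (r i)) (b (s i)) \<in> P" using DP bS by blast
      show "\<And>i. tf (tf (H (r i)) (DD S tf (z (r i)) (z (s i)))) (H (s i)) \<in> P"
        by (rule tf_P[OF p3 p1(2)])
      fix i
      have e1: "H (s i) = DD S tf (z (s i)) (delta S D (b (s i)))"
        unfolding H_def using PI.Dsym[OF dS zS] .
      have "tf (tf (H (r i)) (DD S tf (z (r i)) (z (s i)))) (H (s i))
          \<le> tf (DD S tf (delta S D (b (r i))) (z (s i))) (H (s i))"
        unfolding H_def
        by (rule tf_mono1[OF tf_P[OF PI.DP[OF dS zS] PI.DP[OF zS zS]] PI.DP[OF dS zS] PI.DP[OF dS zS]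
              PI.Dtri[OF dS zS zS]])
      also have "\<dots> \<le> DD S tf (delta S D (b (r i))) (delta S D (b (s i)))"
        unfolding e1 by (rule PI.Dtri) (use dS zS in auto)
      also have "\<dots> = D (b (r i)) (b (s i))" by (rule DD_delta) (use bS in auto)
      finally show "tf (tf (H (r i)) (DD S tf (z (r i)) (z (s i)))) (H (s i)) \<le> D (b (r i)) (b (s i))" .
    qed
  qed
  have fP: "mk b \<in> PiG S D tf" by (rule mk_PiG[OF cb])
  have "pm_converges (DD S tf) z (mk b)" unfolding pm_converges_def
  proof (rule wconv_H0_ge[OF _ _ tf_wconv_H0[OF HP _ Hc fa_H0[OF cb]]])
    show "\<And>n. DD S tf (z n) (mk b) \<in> P" using PI.DP zS fP by blast
    show "\<And>n. mk b (b n) \<in> P" using mk_conv(1)[OF cb bS] .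
    show "\<And>n. tf (H n) (mk b (b n)) \<in> P" by (rule tf_P[OF HP mk_conv(1)[OF cb bS]])
    fix n
    have "tf (H n) (mk b (b n)) = tf (DD S tf (z n) (delta S D (b n))) (DD S tf (delta S D (b n)) (mk b))"
      unfolding H_def using PI.Dsym[OF dS zS] DD_delta_mk[OF cb bS] by simp
    also have "\<dots> \<le> DD S tf (z n) (mk b)" by (rule PI.Dtri) (use zS dS fP in auto)
    finally show "tf (H n) (mk b (b n)) \<le> DD S tf (z n) (mk b)" .
  qed
  thus "\<exists>f\<in>PiG S D tf. pm_converges (DD S tf) z f" using fP by blast
qed

lemma PiG_dense: "pm_dense (PiG S D tf) (DD S tf) (delta S D ` S)"
  unfolding pm_dense_def
proof (intro conjI ballI)
  show "delta S D ` S \<subseteq> PiG S D tf" using delta_PiG by blast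
  fix f assume f: "f \<in> PiG S D tf"
  obtain a where a: "cseq a" "f = mk a" using PiG_mk[OF f] by blast
  have aS: "\<And>n. a n \<in> S" using cseq_S[OF a(1)] .
  have "(\<lambda>n. DD S tf (delta S D (a n)) f) = (\<lambda>n. mk a (a n))"
    using DD_delta_mk[OF a(1) aS] a(2) by simp
  hence "pm_converges (DD S tf) (\<lambda>n. delta S D (a n)) f"
    unfolding pm_converges_def using fa_H0[OF a(1)] by simp
  moreover have "range (\<lambda>n. delta S D (a n)) \<subseteq> delta S D ` S" using aS by blast
  ultimately show "\<exists>z. range z \<subseteq> delta S D ` S \<and> pm_converges (DD S tf) z f" by blast
qed

lemma delta_inj: "inj_on (delta S D) S"
proof (rule inj_onI)
  fix p q assume p: "p \<in> S" and q: "q \<in> S" and e: "delta S D p = delta S D q"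
  have "D p p = D p q" using fun_cong[OF e, of p] p by (simp add: delta_def)
  hence "D p q = H0" using Dself[OF p] by simp
  thus "p = q" by (rule Deq[OF p q])
qed

end

context pms
begin

lemma universal:
  fixes X :: "'b set" and L :: "'b \<Rightarrow> 'b \<Rightarrow> dfun" and \<phi> :: "'a \<Rightarrow> 'b"
  assumes Xs: "pm_space X L tf" and cX: "pm_complete X L" and phiX: "\<phi> ` S \<subseteq> X"
    and iso: "isometric S D L \<phi>" and dn: "pm_dense X L (\<phi> ` S)"
  shows "\<exists>T. bij_betw T (PiG S D tf) X \<and> isometric (PiG S D tf) (DD S tf) L T
     \<and> (\<forall>a\<in>S. T (delta S D a) = \<phi> a)
     \<and> (\<forall>a x. cseq a \<and> x \<in> X \<and> pm_converges L (\<lambda>n. \<phi> (a n)) x \<longrightarrow> T (mk a) = x)"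
proof -
  interpret XX: pms tf X L by (rule pms.intro[OF tfc_axioms]) (unfold pms_axioms_def, rule Xs)
  interpret PI: pms tf "PiG S D tf" "DD S tf" by (rule PiG_pms)
  have isoD0: "\<forall>a\<in>S. \<forall>b\<in>S. L (\<phi> a) (\<phi> b) = D a b"
    using iso unfolding isometric_def .
  have isoD: "L (\<phi> a) (\<phi> b) = D a b" if "a \<in> S" "b \<in> S" for a b
    using isoD0[rule_format, OF that] .
  have phS: "\<And>a. a \<in> S \<Longrightarrow> \<phi> a \<in> X" using phiX by blast
  have cau_eq: "pm_cauchy L (\<lambda>n. \<phi> (c n)) \<longleftrightarrow> pm_cauchy D c" if cS: "\<And>n. c n \<in> S" for c
  proof -
    have "\<And>n p. L (\<phi> (c n)) (\<phi> (c p)) = D (c n) (c p)" by (rule isoD[OF cS cS])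
    thus ?thesis unfolding pm_cauchy_def by simp
  qed
  have cau: "XX.cseq (\<lambda>n. \<phi> (a n))" if a: "cseq a" for a
  proof -
    have aS: "\<And>n. a n \<in> S" using cseq_S[OF a] .
    have "pm_cauchy D a" using a unfolding cseq_def by blast
    hence "pm_cauchy L (\<lambda>n. \<phi> (a n))" using cau_eq[of a, OF aS] by simp
    moreover have "\<forall>n. \<phi> (a n) \<in> X" using phS aS by blast
    ultimately show ?thesis unfolding XX.cseq_def by simp
  qed
  have ex: "\<exists>x\<in>X. pm_converges L (\<lambda>n. \<phi> (a n)) x" if a: "cseq a" for a
  proof -
    have "range (\<lambda>n. \<phi> (a n)) \<subseteq> X \<and> pm_cauchy L (\<lambda>n. \<phi> (a n))"
      using cau[OF a] unfolding XX.cseq_def by blast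
    thus ?thesis using cX unfolding pm_complete_def by blast
  qed
  define rp where "rp f = (SOME a. cseq a \<and> f = mk a)" for f
  define T where "T f = (SOME x. x \<in> X \<and> pm_converges L (\<lambda>n. \<phi> (rp f n)) x)" for f
  have rp: "cseq (rp f) \<and> f = mk (rp f)" if f: "f \<in> PiG S D tf" for f
    unfolding rp_def by (rule someI_ex[of "\<lambda>a. cseq a \<and> f = mk a", OF PiG_mk_ex[OF f]])
  have Tp: "T f \<in> X \<and> pm_converges L (\<lambda>n. \<phi> (rp f n)) (T f)" if f: "f \<in> PiG S D tf" for f
  proof -
    have "\<exists>x. x \<in> X \<and> pm_converges L (\<lambda>n. \<phi> (rp f n)) x" using ex[of "rp f"] rp[OF f] by blast
    thus ?thesis unfolding T_def by (rule someI_ex[of "\<lambda>x. x \<in> X \<and> pm_converges L (\<lambda>n. \<phi> (rp f n)) x"])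
  qed
  have lim_eq: "L x y = DD S tf (mk a) (mk b)"
    if a: "cseq a" and b: "cseq b" and x: "x \<in> X" and y: "y \<in> X"
      and cx: "pm_converges L (\<lambda>n. \<phi> (a n)) x" and cy: "pm_converges L (\<lambda>n. \<phi> (b n)) y" for a b x y
  proof -
    have aS: "\<And>n. a n \<in> S" using cseq_S[OF a] .
    have bS: "\<And>n. b n \<in> S" using cseq_S[OF b] .
    have w: "wconv (\<lambda>n. L (\<phi> (a n)) (\<phi> (b n))) (L x y)"
      by (rule XX.lim_dist[OF _ _ x y cx cy]) (use phS aS bS in auto)
    have "(\<lambda>n. L (\<phi> (a n)) (\<phi> (b n))) = (\<lambda>n. D (a n) (b n))" using isoD aS bS by auto
    hence w2: "wconv (\<lambda>n. D (a n) (b n)) (L x y)" using w by simp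
    show ?thesis using DD_lim[OF a b XX.DP[OF x y] w2] by simp
  qed
  have Tchar: "T (mk a) = x" if a: "cseq a" and x: "x \<in> X" and cx: "pm_converges L (\<lambda>n. \<phi> (a n)) x" for a x
  proof -
    have f: "mk a \<in> PiG S D tf" by (rule mk_PiG[OF a])
    have r: "cseq (rp (mk a))" "mk a = mk (rp (mk a))" using rp[OF f] by auto
    have t: "T (mk a) \<in> X" "pm_converges L (\<lambda>n. \<phi> (rp (mk a) n)) (T (mk a))" using Tp[OF f] by auto
    have "L (T (mk a)) x = DD S tf (mk (rp (mk a))) (mk a)" by (rule lim_eq[OF r(1) a t(1) x t(2) cx])
    also have "\<dots> = DD S tf (mk a) (mk a)" using r(2) by simp
    also have "\<dots> = H0" by (rule PI.Dself[OF f])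
    finally show ?thesis by (rule XX.Deq[OF t(1) x])
  qed
  have Tiso: "L (T f) (T g) = DD S tf f g" if f: "f \<in> PiG S D tf" and g: "g \<in> PiG S D tf" for f g
  proof -
    have r1: "cseq (rp f)" "cseq (rp g)" using rp[OF f] rp[OF g] by simp_all
    have t1: "T f \<in> X" "pm_converges L (\<lambda>n. \<phi> (rp f n)) (T f)" using Tp[OF f] by simp_all
    have t2: "T g \<in> X" "pm_converges L (\<lambda>n. \<phi> (rp g n)) (T g)" using Tp[OF g] by simp_all
    have "L (T f) (T g) = DD S tf (mk (rp f)) (mk (rp g))"
      by (rule lim_eq[OF r1(1) r1(2) t1(1) t2(1) t1(2) t2(2)])
    moreover have "mk (rp f) = f" "mk (rp g) = g" using rp[OF f] rp[OF g] by simp_all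
    ultimately show ?thesis by simp
  qed
  have TX: "\<And>f. f \<in> PiG S D tf \<Longrightarrow> T f \<in> X" using Tp by blast
  have inj: "inj_on T (PiG S D tf)"
  proof (rule inj_onI)
    fix f g assume f: "f \<in> PiG S D tf" and g: "g \<in> PiG S D tf" and e: "T f = T g"
    have "DD S tf f g = L (T f) (T f)" using Tiso[OF f g] e by simp
    also have "\<dots> = H0" by (rule XX.Dself[OF TX[OF f]])
    finally show "f = g" by (rule PI.Deq[OF f g])
  qed
  have surj: "T ` PiG S D tf = X"
  proof
    show "T ` PiG S D tf \<subseteq> X" using TX by blast
    show "X \<subseteq> T ` PiG S D tf"
    proof
      fix x assume x: "x \<in> X"
      obtain z where z: "range z \<subseteq> \<phi> ` S" "pm_converges L z x" using dn x unfolding pm_dense_def by blast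
      have "\<forall>n. \<exists>c. c \<in> S \<and> z n = \<phi> c" using z(1) by blast
      from choice[OF this] obtain c where c0: "\<forall>n. c n \<in> S \<and> z n = \<phi> (c n)" ..
      have cS: "\<And>n. c n \<in> S" using c0 by simp
      have zc: "z = (\<lambda>n. \<phi> (c n))" using c0 by (intro ext) simp
      have "XX.cseq (\<lambda>n. \<phi> (c n))"
        by (rule XX.conv_cseq[OF _ x]) (use phS cS z(2) zc in auto)
      hence "pm_cauchy D c" using cau_eq[of c, OF cS] unfolding XX.cseq_def by blast
      hence cc: "cseq c" unfolding cseq_def using cS by blast
      have "T (mk c) = x" by (rule Tchar[OF cc x]) (use z(2) zc in simp)
      thus "x \<in> T ` PiG S D tf" using mk_PiG[OF cc] by blast
    qed
  qed
  have Tdelta: "T (delta S D a) = \<phi> a" if a: "a \<in> S" for a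
  proof -
    have "L (\<phi> a) (\<phi> a) = H0" using XX.Dself[OF phS[OF a]] .
    hence "pm_converges L (\<lambda>n. \<phi> a) (\<phi> a)" unfolding pm_converges_def using wconv_const[of H0] by simp
    thus ?thesis unfolding delta_mk[OF a] by (rule Tchar[OF cseq_const[OF a] phS[OF a]])
  qed
  show ?thesis
  proof (intro exI conjI)
    show "bij_betw T (PiG S D tf) X" unfolding bij_betw_def using inj surj by blast
    show "isometric (PiG S D tf) (DD S tf) L T" unfolding isometric_def
      by (intro ballI) (rule Tiso)
    show "\<forall>a\<in>S. T (delta S D a) = \<phi> a" by (intro ballI) (rule Tdelta)
    show "\<forall>a x. cseq a \<and> x \<in> X \<and> pm_converges L (\<lambda>n. \<phi> (a n)) x \<longrightarrow> T (mk a) = x"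
      by (intro allI impI, elim conjE) (rule Tchar)
  qed
qed

end

locale pmg = tfc +
  fixes G :: "'a monoid" and D :: "'a \<Rightarrow> 'a \<Rightarrow> dfun"
  assumes pmgrp: "pm_group G D tf"

lemma (in pmg) pmg_grp: "group G"
  using pmgrp unfolding pm_group_def by (elim conjE)

lemma (in pmg) pmg_pms: "pms tf (carrier G) D"
  using pmgrp unfolding pm_group_def by (intro pms.intro[OF tfc_axioms] pms_axioms.intro) (elim conjE)

sublocale pmg \<subseteq> pms tf "carrier G" D by (rule pmg_pms)

context pmg
begin

lemma pmg_inv: "\<forall>p\<in>carrier G. \<forall>q\<in>carrier G. \<forall>r\<in>carrier G.
          D (p \<otimes>\<^bsub>G\<^esub> r) (q \<otimes>\<^bsub>G\<^esub> r) = D p q \<and> D (r \<otimes>\<^bsub>G\<^esub> p) (r \<otimes>\<^bsub>G\<^esub> q) = D p q"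
  using pmgrp unfolding pm_group_def by (elim conjE)

lemma Dr: assumes "p \<in> carrier G" "q \<in> carrier G" "r \<in> carrier G"
  shows "D (p \<otimes>\<^bsub>G\<^esub> r) (q \<otimes>\<^bsub>G\<^esub> r) = D p q"
  using pmg_inv[rule_format, OF assms] by (elim conjE)

lemma Dl: assumes "p \<in> carrier G" "q \<in> carrier G" "r \<in> carrier G"
  shows "D (r \<otimes>\<^bsub>G\<^esub> p) (r \<otimes>\<^bsub>G\<^esub> q) = D p q"
  using pmg_inv[rule_format, OF assms] by (elim conjE)

lemma mc: "x \<in> carrier G \<Longrightarrow> y \<in> carrier G \<Longrightarrow> x \<otimes>\<^bsub>G\<^esub> y \<in> carrier G"
  by (rule monoid.m_closed[OF group.is_monoid[OF pmg_grp]])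

lemma odot_mk:
  assumes a: "cseq a" and b: "cseq b"
  shows "cseq (\<lambda>n. a n \<otimes>\<^bsub>G\<^esub> b n)" "odot G tf (mk a) (mk b) = mk (\<lambda>n. a n \<otimes>\<^bsub>G\<^esub> b n)"
proof -
  interpret grp: group G by (rule pmg_grp)
  have aS: "\<And>n. a n \<in> carrier G" using cseq_S[OF a] .
  have bS: "\<And>n. b n \<in> carrier G" using cseq_S[OF b] .
  define c where "c n = a n \<otimes>\<^bsub>G\<^esub> b n" for n
  have cS: "\<And>n. c n \<in> carrier G" unfolding c_def using aS bS by simp
  have cc: "cseq c"
  proof (rule cseqI[OF cS])
    fix r s :: "nat \<Rightarrow> nat" assume rs: "\<forall>i. i \<le> r i \<and> i \<le> s i"
    have w1: "wconv (\<lambda>i. D (a (r i)) (a (s i))) H0" by (rule cseq_conv[OF a rs])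
    have w2: "wconv (\<lambda>i. D (b (r i)) (b (s i))) H0" by (rule cseq_conv[OF b rs])
    have p1: "\<And>i. D (a (r i)) (a (s i)) \<in> P" using DP aS by blast
    have p2: "\<And>i. D (b (r i)) (b (s i)) \<in> P" using DP bS by blast
    have w: "wconv (\<lambda>i. tf (D (a (r i)) (a (s i))) (D (b (r i)) (b (s i)))) H0"
      by (rule tf_wconv_H0[OF p1 p2 w1 w2])
    show "wconv (\<lambda>i. D (c (r i)) (c (s i))) H0"
    proof (rule wconv_H0_ge[OF _ _ w])
      show "\<And>i. D (c (r i)) (c (s i)) \<in> P" using DP cS by blast
      show "\<And>i. tf (D (a (r i)) (a (s i))) (D (b (r i)) (b (s i))) \<in> P" by (rule tf_P[OF p1 p2])
      fix i
      have e1: "D (c (r i)) (a (s i) \<otimes>\<^bsub>G\<^esub> b (r i)) = D (a (r i)) (a (s i))"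
        unfolding c_def by (rule Dr) (use aS bS in auto)
      have e2: "D (a (s i) \<otimes>\<^bsub>G\<^esub> b (r i)) (c (s i)) = D (b (r i)) (b (s i))"
        unfolding c_def by (rule Dl) (use aS bS in auto)
      have "tf (D (c (r i)) (a (s i) \<otimes>\<^bsub>G\<^esub> b (r i))) (D (a (s i) \<otimes>\<^bsub>G\<^esub> b (r i)) (c (s i))) \<le> D (c (r i)) (c (s i))"
        by (rule Dtri) (use cS aS bS in auto)
      thus "tf (D (a (r i)) (a (s i))) (D (b (r i)) (b (s i))) \<le> D (c (r i)) (c (s i))"
        unfolding e1 e2 .
    qed
  qed
  show "cseq (\<lambda>n. a n \<otimes>\<^bsub>G\<^esub> b n)" using cc unfolding c_def .
  have val: "odot G tf (mk a) (mk b) x = mk c x" if x: "x \<in> carrier G" for x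
  proof -
    define B where "B = {tf (mk a y) (mk b z) |y z. y \<in> carrier G \<and> z \<in> carrier G \<and> y \<otimes>\<^bsub>G\<^esub> z = x}"
    have BP: "B \<subseteq> P"
    proof
      fix F assume "F \<in> B"
      then obtain y z where yz: "y \<in> carrier G" "z \<in> carrier G" "F = tf (mk a y) (mk b z)"
        unfolding B_def by auto
      show "F \<in> P" unfolding yz(3) by (rule tf_P[OF mk_conv(1)[OF a yz(1)] mk_conv(1)[OF b yz(2)]])
    qed
    have od: "odot G tf (mk a) (mk b) x = dsup B" unfolding odot_def B_def using x by simp
    have mcx: "mk c x \<in> P" by (rule mk_conv(1)[OF cc x])
    have up: "dsup B \<le> mk c x"
    proof (rule dsup_le[OF mcx])
      fix F assume "F \<in> B"
      then obtain y z where yz: "y \<in> carrier G" "z \<in> carrier G" "y \<otimes>\<^bsub>G\<^esub> z = x" "F = tf (mk a y) (mk b z)"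
        unfolding B_def by auto
      have cv: "wconv (\<lambda>n. tf (D (a n) y) (D (b n) z)) (tf (mk a y) (mk b z))"
        by (rule tf_wconv[OF _ _ mk_conv(1)[OF a yz(1)] mk_conv(1)[OF b yz(2)] mk_conv(2)[OF a yz(1)] mk_conv(2)[OF b yz(2)]])
           (use DP aS bS yz in auto)
      have le: "tf (D (a n) y) (D (b n) z) \<le> D (c n) x" for n
      proof -
        have e1: "D (c n) (y \<otimes>\<^bsub>G\<^esub> b n) = D (a n) y" unfolding c_def by (rule Dr) (use aS bS yz in auto)
        have "D (y \<otimes>\<^bsub>G\<^esub> b n) (y \<otimes>\<^bsub>G\<^esub> z) = D (b n) z" by (rule Dl) (use bS yz in auto)
        hence e2: "D (y \<otimes>\<^bsub>G\<^esub> b n) x = D (b n) z" using yz(3) by simp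
        have "tf (D (c n) (y \<otimes>\<^bsub>G\<^esub> b n)) (D (y \<otimes>\<^bsub>G\<^esub> b n) x) \<le> D (c n) x"
          by (rule Dtri) (use cS bS yz x in auto)
        thus ?thesis unfolding e1 e2 .
      qed
      have "tf (mk a y) (mk b z) \<le> mk c x"
        by (rule wconv_le[OF tf_P[OF mk_conv(1)[OF a yz(1)] mk_conv(1)[OF b yz(2)]] mcx cv mk_conv(2)[OF cc x]])
           (use le in \<open>auto simp: le_fun_def\<close>)
      thus "F \<le> mk c x" using yz(4) by simp
    qed
    have low: "mk c x \<le> dsup B"
    proof -
      have maP: "\<And>m. mk a (a m) \<in> P" using mk_conv(1)[OF a aS] .
      have claim: "tf (mk a (a m)) (mk c x) \<le> mk b (inv\<^bsub>G\<^esub> (a m) \<otimes>\<^bsub>G\<^esub> x)" for m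
      proof -
        have im: "inv\<^bsub>G\<^esub> (a m) \<otimes>\<^bsub>G\<^esub> x \<in> carrier G" using aS x by simp
        have "(\<lambda>n. D (a m) (a n)) = (\<lambda>n. D (a n) (a m))" using Dsym aS by auto
        hence w1: "wconv (\<lambda>n. D (a m) (a n)) (mk a (a m))" using mk_conv(2)[OF a aS] by simp
        have cv: "wconv (\<lambda>n. tf (D (a m) (a n)) (D (c n) x)) (tf (mk a (a m)) (mk c x))"
          by (rule tf_wconv[OF _ _ maP mcx w1 mk_conv(2)[OF cc x]]) (use DP aS cS x in auto)
        have le: "tf (D (a m) (a n)) (D (c n) x) \<le> D (b n) (inv\<^bsub>G\<^esub> (a m) \<otimes>\<^bsub>G\<^esub> x)" for n
        proof -
          have e0: "a m \<otimes>\<^bsub>G\<^esub> (inv\<^bsub>G\<^esub> (a m) \<otimes>\<^bsub>G\<^esub> x) = x"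
            using aS x by (simp add: grp.m_assoc[symmetric])
          have e1: "D (b n) (inv\<^bsub>G\<^esub> (a m) \<otimes>\<^bsub>G\<^esub> x) = D (a m \<otimes>\<^bsub>G\<^esub> b n) x"
            using Dl[OF bS im aS[of m]] e0 by simp
          have e2: "D (a m \<otimes>\<^bsub>G\<^esub> b n) (c n) = D (a m) (a n)"
            unfolding c_def by (rule Dr) (use aS bS in auto)
          have "tf (D (a m \<otimes>\<^bsub>G\<^esub> b n) (c n)) (D (c n) x) \<le> D (a m \<otimes>\<^bsub>G\<^esub> b n) x"
            by (rule Dtri) (use aS bS cS x in auto)
          thus ?thesis unfolding e1 e2 .
        qed
        show ?thesis
          by (rule wconv_le[OF tf_P[OF maP mcx] mk_conv(1)[OF b im] cv mk_conv(2)[OF b im]])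
             (use le in \<open>auto simp: le_fun_def\<close>)
      qed
      define Q where "Q m = tf (mk a (a m)) (tf (mk a (a m)) (mk c x))" for m
      have QP: "\<And>m. tf (mk a (a m)) (mk c x) \<in> P" using tf_P[OF maP mcx] .
      have cQ0: "wconv Q (tf H0 (tf H0 (mk c x)))" unfolding Q_def
        by (rule tf_wconv[OF maP QP H0_P tf_P[OF H0_P mcx] fa_H0[OF a] tf_wconv[OF maP _ H0_P mcx fa_H0[OF a] wconv_const]])
           (use mcx in simp)
      have "tf H0 (tf H0 (mk c x)) = mk c x" using tf_H0'[OF mcx] tf_H0'[OF tf_P[OF H0_P mcx]] by simp
      hence cQ: "wconv Q (mk c x)" using cQ0 by simp
      have QB: "Q m \<le> dsup B" for m
      proof -
        have im: "inv\<^bsub>G\<^esub> (a m) \<otimes>\<^bsub>G\<^esub> x \<in> carrier G" using aS x by simp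
        have "Q m \<le> tf (mk a (a m)) (mk b (inv\<^bsub>G\<^esub> (a m) \<otimes>\<^bsub>G\<^esub> x))"
          unfolding Q_def by (rule tf_mono2[OF maP QP mk_conv(1)[OF b im] claim])
        also have "tf (mk a (a m)) (mk b (inv\<^bsub>G\<^esub> (a m) \<otimes>\<^bsub>G\<^esub> x)) \<in> B"
        proof -
          have e: "a m \<otimes>\<^bsub>G\<^esub> (inv\<^bsub>G\<^esub> (a m) \<otimes>\<^bsub>G\<^esub> x) = x"
            using aS x by (simp add: grp.m_assoc[symmetric])
          show ?thesis unfolding B_def
            by (rule CollectI, rule exI[of _ "a m"], rule exI[of _ "inv\<^bsub>G\<^esub> (a m) \<otimes>\<^bsub>G\<^esub> x"])
               (use e aS im in simp)
        qed
        hence "tf (mk a (a m)) (mk b (inv\<^bsub>G\<^esub> (a m) \<otimes>\<^bsub>G\<^esub> x)) \<le> dsup B" by (rule dsup_upper[OF BP])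
        finally show ?thesis .
      qed
      show ?thesis by (rule wconv_le_mono[OF mcx cQ QB dsup_props[OF BP]])
    qed
    show ?thesis using od up low by simp
  qed
  show "odot G tf (mk a) (mk b) = mk (\<lambda>n. a n \<otimes>\<^bsub>G\<^esub> b n)"
  proof (rule ext)
    fix x show "odot G tf (mk a) (mk b) x = mk (\<lambda>n. a n \<otimes>\<^bsub>G\<^esub> b n) x"
    proof (cases "x \<in> carrier G")
      case True thus ?thesis using val[OF True] unfolding c_def by simp
    qed (simp add: odot_def mk_undef)
  qed
qed

end

context pmg
begin

lemma PiGroup_simps:
  "carrier (PiGroup G D tf) = PiG (carrier G) D tf"
  "monoid.mult (PiGroup G D tf) = odot G tf"
  "one (PiGroup G D tf) = delta (carrier G) D \<one>\<^bsub>G\<^esub>"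
  by (simp_all add: PiGroup_def)

lemma D_inv: assumes p: "p \<in> carrier G" and q: "q \<in> carrier G"
  shows "D (inv\<^bsub>G\<^esub> p) (inv\<^bsub>G\<^esub> q) = D q p"
proof -
  interpret grp: group G by (rule pmg_grp)
  have ip: "inv\<^bsub>G\<^esub> p \<in> carrier G" and iq: "inv\<^bsub>G\<^esub> q \<in> carrier G" using p q by simp_all
  have "D (inv\<^bsub>G\<^esub> p) (inv\<^bsub>G\<^esub> q) = D (inv\<^bsub>G\<^esub> p \<otimes>\<^bsub>G\<^esub> q) (inv\<^bsub>G\<^esub> q \<otimes>\<^bsub>G\<^esub> q)"
    using Dr[OF ip iq q] by simp
  also have "\<dots> = D (p \<otimes>\<^bsub>G\<^esub> (inv\<^bsub>G\<^esub> p \<otimes>\<^bsub>G\<^esub> q)) (p \<otimes>\<^bsub>G\<^esub> (inv\<^bsub>G\<^esub> q \<otimes>\<^bsub>G\<^esub> q))"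
    using Dl[of "inv\<^bsub>G\<^esub> p \<otimes>\<^bsub>G\<^esub> q" "inv\<^bsub>G\<^esub> q \<otimes>\<^bsub>G\<^esub> q" p] ip iq p q by simp
  also have "p \<otimes>\<^bsub>G\<^esub> (inv\<^bsub>G\<^esub> p \<otimes>\<^bsub>G\<^esub> q) = q" using p q by (simp add: grp.m_assoc[symmetric])
  also have "p \<otimes>\<^bsub>G\<^esub> (inv\<^bsub>G\<^esub> q \<otimes>\<^bsub>G\<^esub> q) = p" using p q by simp
  finally show ?thesis .
qed

lemma cseq_inv: assumes a: "cseq a" shows "cseq (\<lambda>n. inv\<^bsub>G\<^esub> (a n))"
proof -
  interpret grp: group G by (rule pmg_grp)
  have aS: "\<And>n. a n \<in> carrier G" using cseq_S[OF a] .
  show ?thesis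
  proof (rule cseqI)
    show "\<And>n. inv\<^bsub>G\<^esub> (a n) \<in> carrier G" using aS by simp
    fix r s :: "nat \<Rightarrow> nat" assume rs: "\<forall>i. i \<le> r i \<and> i \<le> s i"
    have rs': "\<forall>i. i \<le> s i \<and> i \<le> r i" using rs by blast
    have "(\<lambda>i. D (inv\<^bsub>G\<^esub> (a (r i))) (inv\<^bsub>G\<^esub> (a (s i)))) = (\<lambda>i. D (a (s i)) (a (r i)))"
      using D_inv aS by auto
    thus "wconv (\<lambda>i. D (inv\<^bsub>G\<^esub> (a (r i))) (inv\<^bsub>G\<^esub> (a (s i)))) H0"
      using cseq_conv[OF a rs'] by simp
  qed
qed

lemma PiGroup_group: "group (PiGroup G D tf)"
proof -
  interpret grp: group G by (rule pmg_grp)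
  show ?thesis
  proof (rule groupI, unfold PiGroup_simps)
    fix x y assume x: "x \<in> PiG (carrier G) D tf" and y: "y \<in> PiG (carrier G) D tf"
    obtain a where a: "cseq a" "x = mk a" using PiG_mk[OF x] by blast
    obtain b where b: "cseq b" "y = mk b" using PiG_mk[OF y] by blast
    show "odot G tf x y \<in> PiG (carrier G) D tf"
      using odot_mk[OF a(1) b(1)] mk_PiG a(2) b(2) by simp
  next
    show "delta (carrier G) D \<one>\<^bsub>G\<^esub> \<in> PiG (carrier G) D tf" by (rule delta_PiG) simp
  next
    fix x y z assume x: "x \<in> PiG (carrier G) D tf" and y: "y \<in> PiG (carrier G) D tf"
      and z: "z \<in> PiG (carrier G) D tf"
    obtain a where a: "cseq a" "x = mk a" using PiG_mk[OF x] by blast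
    obtain b where b: "cseq b" "y = mk b" using PiG_mk[OF y] by blast
    obtain c where c: "cseq c" "z = mk c" using PiG_mk[OF z] by blast
    have aS: "\<And>n. a n \<in> carrier G" using cseq_S[OF a(1)] .
    have bS: "\<And>n. b n \<in> carrier G" using cseq_S[OF b(1)] .
    have cS: "\<And>n. c n \<in> carrier G" using cseq_S[OF c(1)] .
    have "odot G tf (odot G tf x y) z = mk (\<lambda>n. (a n \<otimes>\<^bsub>G\<^esub> b n) \<otimes>\<^bsub>G\<^esub> c n)"
      using odot_mk[OF a(1) b(1)] odot_mk[OF odot_mk(1)[OF a(1) b(1)] c(1)] a(2) b(2) c(2) by simp
    also have "(\<lambda>n. (a n \<otimes>\<^bsub>G\<^esub> b n) \<otimes>\<^bsub>G\<^esub> c n) = (\<lambda>n. a n \<otimes>\<^bsub>G\<^esub> (b n \<otimes>\<^bsub>G\<^esub> c n))"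
      using aS bS cS by (simp add: grp.m_assoc)
    also have "mk (\<lambda>n. a n \<otimes>\<^bsub>G\<^esub> (b n \<otimes>\<^bsub>G\<^esub> c n)) = odot G tf x (odot G tf y z)"
      using odot_mk[OF b(1) c(1)] odot_mk[OF a(1) odot_mk(1)[OF b(1) c(1)]] a(2) b(2) c(2) by simp
    finally show "odot G tf (odot G tf x y) z = odot G tf x (odot G tf y z)" .
  next
    fix x assume x: "x \<in> PiG (carrier G) D tf"
    obtain a where a: "cseq a" "x = mk a" using PiG_mk[OF x] by blast
    have aS: "\<And>n. a n \<in> carrier G" using cseq_S[OF a(1)] .
    have e: "\<one>\<^bsub>G\<^esub> \<in> carrier G" by simp
    have "odot G tf (delta (carrier G) D \<one>\<^bsub>G\<^esub>) x = mk (\<lambda>n. \<one>\<^bsub>G\<^esub> \<otimes>\<^bsub>G\<^esub> a n)"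
      using odot_mk[OF cseq_const[OF e] a(1)] delta_mk[OF e] a(2) by simp
    also have "(\<lambda>n. \<one>\<^bsub>G\<^esub> \<otimes>\<^bsub>G\<^esub> a n) = a" using aS by (simp add: fun_eq_iff)
    finally show "odot G tf (delta (carrier G) D \<one>\<^bsub>G\<^esub>) x = x" using a(2) by simp
  next
    fix x assume x: "x \<in> PiG (carrier G) D tf"
    obtain a where a: "cseq a" "x = mk a" using PiG_mk[OF x] by blast
    have aS: "\<And>n. a n \<in> carrier G" using cseq_S[OF a(1)] .
    have e: "\<one>\<^bsub>G\<^esub> \<in> carrier G" by simp
    have ci: "cseq (\<lambda>n. inv\<^bsub>G\<^esub> (a n))" by (rule cseq_inv[OF a(1)])
    have "odot G tf (mk (\<lambda>n. inv\<^bsub>G\<^esub> (a n))) x = mk (\<lambda>n. inv\<^bsub>G\<^esub> (a n) \<otimes>\<^bsub>G\<^esub> a n)"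
      using odot_mk[OF ci a(1)] a(2) by simp
    also have "(\<lambda>n. inv\<^bsub>G\<^esub> (a n) \<otimes>\<^bsub>G\<^esub> a n) = (\<lambda>n. \<one>\<^bsub>G\<^esub>)" using aS by (simp add: fun_eq_iff)
    also have "mk (\<lambda>n. \<one>\<^bsub>G\<^esub>) = delta (carrier G) D \<one>\<^bsub>G\<^esub>" using delta_mk[OF e] by simp
    finally have "odot G tf (mk (\<lambda>n. inv\<^bsub>G\<^esub> (a n))) x = delta (carrier G) D \<one>\<^bsub>G\<^esub>" .
    moreover have "mk (\<lambda>n. inv\<^bsub>G\<^esub> (a n)) \<in> PiG (carrier G) D tf" by (rule mk_PiG[OF ci])
    ultimately show "\<exists>y\<in>PiG (carrier G) D tf. odot G tf y x = delta (carrier G) D \<one>\<^bsub>G\<^esub>" by blast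
  qed
qed

lemma PiGroup_pm_group: "pm_group (PiGroup G D tf) (DD (carrier G) tf) tf"
  unfolding pm_group_def PiGroup_simps
proof (intro conjI ballI)
  show "group (PiGroup G D tf)" by (rule PiGroup_group)
  show "pm_space (PiG (carrier G) D tf) (DD (carrier G) tf) tf" by (rule PiG_pm_space)
  fix p q r assume p: "p \<in> PiG (carrier G) D tf" and q: "q \<in> PiG (carrier G) D tf"
    and r: "r \<in> PiG (carrier G) D tf"
  obtain a where a: "cseq a" "p = mk a" using PiG_mk[OF p] by blast
  obtain b where b: "cseq b" "q = mk b" using PiG_mk[OF q] by blast
  obtain c where c: "cseq c" "r = mk c" using PiG_mk[OF r] by blast
  have aS: "\<And>n. a n \<in> carrier G" using cseq_S[OF a(1)] .
  have bS: "\<And>n. b n \<in> carrier G" using cseq_S[OF b(1)] .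
  have cS: "\<And>n. c n \<in> carrier G" using cseq_S[OF c(1)] .
  have w: "wconv (\<lambda>n. D (a n) (b n)) (DD (carrier G) tf p q)" using DD_mk(2)[OF a(1) b(1)] a(2) b(2) by simp
  have Pq: "DD (carrier G) tf p q \<in> P" using DD_mk(1)[OF a(1) b(1)] a(2) b(2) by simp
  have "(\<lambda>n. D (a n \<otimes>\<^bsub>G\<^esub> c n) (b n \<otimes>\<^bsub>G\<^esub> c n)) = (\<lambda>n. D (a n) (b n))"
    using Dr aS bS cS by auto
  hence w1: "wconv (\<lambda>n. D (a n \<otimes>\<^bsub>G\<^esub> c n) (b n \<otimes>\<^bsub>G\<^esub> c n)) (DD (carrier G) tf p q)" using w by simp
  have "(\<lambda>n. D (c n \<otimes>\<^bsub>G\<^esub> a n) (c n \<otimes>\<^bsub>G\<^esub> b n)) = (\<lambda>n. D (a n) (b n))"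
    using Dl aS bS cS by auto
  hence w2: "wconv (\<lambda>n. D (c n \<otimes>\<^bsub>G\<^esub> a n) (c n \<otimes>\<^bsub>G\<^esub> b n)) (DD (carrier G) tf p q)" using w by simp
  have "DD (carrier G) tf (mk (\<lambda>n. a n \<otimes>\<^bsub>G\<^esub> c n)) (mk (\<lambda>n. b n \<otimes>\<^bsub>G\<^esub> c n)) = DD (carrier G) tf p q"
    by (rule DD_lim[OF odot_mk(1)[OF a(1) c(1)] odot_mk(1)[OF b(1) c(1)] Pq w1])
  thus "DD (carrier G) tf (odot G tf p r) (odot G tf q r) = DD (carrier G) tf p q"
    using odot_mk(2)[OF a(1) c(1)] odot_mk(2)[OF b(1) c(1)] a(2) b(2) c(2) by simp
  have "DD (carrier G) tf (mk (\<lambda>n. c n \<otimes>\<^bsub>G\<^esub> a n)) (mk (\<lambda>n. c n \<otimes>\<^bsub>G\<^esub> b n)) = DD (carrier G) tf p q"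
    by (rule DD_lim[OF odot_mk(1)[OF c(1) a(1)] odot_mk(1)[OF c(1) b(1)] Pq w2])
  thus "DD (carrier G) tf (odot G tf r p) (odot G tf r q) = DD (carrier G) tf p q"
    using odot_mk(2)[OF c(1) a(1)] odot_mk(2)[OF c(1) b(1)] a(2) b(2) c(2) by simp
qed

lemma delta_hom: "delta (carrier G) D \<in> hom G (PiGroup G D tf)"
proof (rule homI, unfold PiGroup_simps)
  fix x assume "x \<in> carrier G"
  thus "delta (carrier G) D x \<in> PiG (carrier G) D tf" by (rule delta_PiG)
next
  fix x y assume x: "x \<in> carrier G" and y: "y \<in> carrier G"
  have xy: "x \<otimes>\<^bsub>G\<^esub> y \<in> carrier G" by (rule mc[OF x y])
  show "delta (carrier G) D (x \<otimes>\<^bsub>G\<^esub> y) = odot G tf (delta (carrier G) D x) (delta (carrier G) D y)"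
    using odot_mk(2)[OF cseq_const[OF x] cseq_const[OF y]] delta_mk[OF x] delta_mk[OF y] delta_mk[OF xy]
    by simp
qed

lemma conv_mult:
  assumes zS: "\<And>n. z n \<in> carrier G" and wS: "\<And>n. w n \<in> carrier G" and x: "x \<in> carrier G" and y: "y \<in> carrier G"
    and cz: "pm_converges D z x" and cw: "pm_converges D w y"
  shows "pm_converges D (\<lambda>n. z n \<otimes>\<^bsub>G\<^esub> w n) (x \<otimes>\<^bsub>G\<^esub> y)"
  unfolding pm_converges_def
proof (rule wconv_H0_ge)
  have p1: "\<And>n. D (z n) x \<in> P" using DP zS x by blast
  have p2: "\<And>n. D (w n) y \<in> P" using DP wS y by blast
  show "wconv (\<lambda>n. tf (D (z n) x) (D (w n) y)) H0"
    by (rule tf_wconv_H0[OF p1 p2 cz[unfolded pm_converges_def] cw[unfolded pm_converges_def]])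
  show "\<And>n. tf (D (z n) x) (D (w n) y) \<in> P" by (rule tf_P[OF p1 p2])
  show "\<And>n. D (z n \<otimes>\<^bsub>G\<^esub> w n) (x \<otimes>\<^bsub>G\<^esub> y) \<in> P" using DP mc zS wS x y by blast
  fix n
  have e1: "D (z n \<otimes>\<^bsub>G\<^esub> w n) (x \<otimes>\<^bsub>G\<^esub> w n) = D (z n) x" by (rule Dr[OF zS x wS])
  have e2: "D (x \<otimes>\<^bsub>G\<^esub> w n) (x \<otimes>\<^bsub>G\<^esub> y) = D (w n) y" by (rule Dl[OF wS y x])
  have "tf (D (z n \<otimes>\<^bsub>G\<^esub> w n) (x \<otimes>\<^bsub>G\<^esub> w n)) (D (x \<otimes>\<^bsub>G\<^esub> w n) (x \<otimes>\<^bsub>G\<^esub> y)) \<le> D (z n \<otimes>\<^bsub>G\<^esub> w n) (x \<otimes>\<^bsub>G\<^esub> y)"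
    by (rule Dtri) (use mc zS wS x y in auto)
  thus "tf (D (z n) x) (D (w n) y) \<le> D (z n \<otimes>\<^bsub>G\<^esub> w n) (x \<otimes>\<^bsub>G\<^esub> y)" unfolding e1 e2 .
qed

end

context pmg
begin

lemma universal_group:
  fixes X :: "'b monoid" and L :: "'b \<Rightarrow> 'b \<Rightarrow> dfun" and \<phi> :: "'a \<Rightarrow> 'b"
  assumes Xg: "pm_group X L tf" and cX: "pm_complete (carrier X) L" and hm: "\<phi> \<in> hom G X"
    and iso: "isometric (carrier G) D L \<phi>" and dn: "pm_dense (carrier X) L (\<phi> ` carrier G)"
  shows "\<exists>T. T \<in> iso (PiGroup G D tf) X \<and> isometric (PiG (carrier G) D tf) (DD (carrier G) tf) L T
     \<and> (\<forall>a\<in>carrier G. T (delta (carrier G) D a) = \<phi> a)"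
proof -
  interpret XG: pmg tf X L by (rule pmg.intro[OF tfc_axioms]) (unfold pmg_axioms_def, rule Xg)
  have Xs: "pm_space (carrier X) L tf" using Xg unfolding pm_group_def by (elim conjE)
  have phiX: "\<phi> ` carrier G \<subseteq> carrier X" by (rule hom_carrier[OF hm])
  from universal[OF Xs cX phiX iso dn] obtain T where
    T0: "bij_betw T (PiG (carrier G) D tf) (carrier X) \<and> isometric (PiG (carrier G) D tf) (DD (carrier G) tf) L T
     \<and> (\<forall>a\<in>carrier G. T (delta (carrier G) D a) = \<phi> a)
     \<and> (\<forall>a x. cseq a \<and> x \<in> carrier X \<and> pm_converges L (\<lambda>n. \<phi> (a n)) x \<longrightarrow> T (mk a) = x)" ..
  have Tb: "bij_betw T (PiG (carrier G) D tf) (carrier X)" using T0 by (elim conjE)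
  have Ti: "isometric (PiG (carrier G) D tf) (DD (carrier G) tf) L T" using T0 by (elim conjE)
  have Td: "\<forall>a\<in>carrier G. T (delta (carrier G) D a) = \<phi> a" using T0 by (elim conjE)
  have Tc0: "\<forall>a x. cseq a \<and> x \<in> carrier X \<and> pm_converges L (\<lambda>n. \<phi> (a n)) x \<longrightarrow> T (mk a) = x"
    using T0 by (elim conjE)
  have Tc: "T (mk a) = x" if "cseq a" "x \<in> carrier X" "pm_converges L (\<lambda>n. \<phi> (a n)) x" for a x
    using Tc0 that by blast
  have isoD0: "\<forall>a\<in>carrier G. \<forall>b\<in>carrier G. L (\<phi> a) (\<phi> b) = D a b"
    using iso unfolding isometric_def .
  have hm0: "\<phi> \<in> {h. h \<in> carrier G \<rightarrow> carrier X \<and>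
      (\<forall>x \<in> carrier G. \<forall>y \<in> carrier G. h (x \<otimes>\<^bsub>G\<^esub> y) = h x \<otimes>\<^bsub>X\<^esub> h y)}"
    using hm unfolding hom_def .
  have hmul0: "\<forall>x \<in> carrier G. \<forall>y \<in> carrier G. \<phi> (x \<otimes>\<^bsub>G\<^esub> y) = \<phi> x \<otimes>\<^bsub>X\<^esub> \<phi> y"
    using CollectD[OF hm0] by (elim conjE)
  have phS: "\<And>a. a \<in> carrier G \<Longrightarrow> \<phi> a \<in> carrier X" using phiX by blast
  have ex: "\<exists>x. x \<in> carrier X \<and> pm_converges L (\<lambda>n. \<phi> (a n)) x" if a: "cseq a" for a
  proof -
    have aS: "\<And>n. a n \<in> carrier G" using cseq_S[OF a] .
    have "\<And>n p. L (\<phi> (a n)) (\<phi> (a p)) = D (a n) (a p)" by (rule isoD0[rule_format, OF aS aS])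
    moreover have "pm_cauchy D a" using a unfolding cseq_def by blast
    ultimately have "pm_cauchy L (\<lambda>n. \<phi> (a n))" unfolding pm_cauchy_def by simp
    moreover have "range (\<lambda>n. \<phi> (a n)) \<subseteq> carrier X" using phS aS by blast
    ultimately have "\<exists>x\<in>carrier X. pm_converges L (\<lambda>n. \<phi> (a n)) x"
      using cX unfolding pm_complete_def by blast
    thus ?thesis by blast
  qed
  have Tmul: "T (odot G tf f g) = T f \<otimes>\<^bsub>X\<^esub> T g"
    if f: "f \<in> PiG (carrier G) D tf" and g: "g \<in> PiG (carrier G) D tf" for f g
  proof -
    obtain a where a: "cseq a" "f = mk a" using PiG_mk[OF f] by blast
    obtain b where b: "cseq b" "g = mk b" using PiG_mk[OF g] by blast
    have aS: "\<And>n. a n \<in> carrier G" using cseq_S[OF a(1)] .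
    have bS: "\<And>n. b n \<in> carrier G" using cseq_S[OF b(1)] .
    obtain x where x: "x \<in> carrier X" "pm_converges L (\<lambda>n. \<phi> (a n)) x" using ex[OF a(1)] by blast
    obtain y where y: "y \<in> carrier X" "pm_converges L (\<lambda>n. \<phi> (b n)) y" using ex[OF b(1)] by blast
    have Tf: "T f = x" using Tc[OF a(1) x] a(2) by simp
    have Tg: "T g = y" using Tc[OF b(1) y] b(2) by simp
    have cm: "pm_converges L (\<lambda>n. \<phi> (a n) \<otimes>\<^bsub>X\<^esub> \<phi> (b n)) (x \<otimes>\<^bsub>X\<^esub> y)"
      by (rule XG.conv_mult[OF _ _ x(1) y(1) x(2) y(2)]) (use phS aS bS in auto)
    have "(\<lambda>n. \<phi> (a n \<otimes>\<^bsub>G\<^esub> b n)) = (\<lambda>n. \<phi> (a n) \<otimes>\<^bsub>X\<^esub> \<phi> (b n))"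
      using hmul0 aS bS by auto
    hence cm': "pm_converges L (\<lambda>n. \<phi> (a n \<otimes>\<^bsub>G\<^esub> b n)) (x \<otimes>\<^bsub>X\<^esub> y)" using cm by simp
    have "T (mk (\<lambda>n. a n \<otimes>\<^bsub>G\<^esub> b n)) = x \<otimes>\<^bsub>X\<^esub> y"
      by (rule Tc[OF odot_mk(1)[OF a(1) b(1)] XG.mc[OF x(1) y(1)] cm'])
    thus ?thesis using odot_mk(2)[OF a(1) b(1)] a(2) b(2) Tf Tg by simp
  qed
  have Thom: "T \<in> hom (PiGroup G D tf) X"
  proof (rule homI, unfold PiGroup_simps)
    fix f assume "f \<in> PiG (carrier G) D tf"
    thus "T f \<in> carrier X" using bij_betw_apply[OF Tb] by blast
  next
    fix f g assume "f \<in> PiG (carrier G) D tf" "g \<in> PiG (carrier G) D tf"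
    thus "T (odot G tf f g) = T f \<otimes>\<^bsub>X\<^esub> T g" by (rule Tmul)
  qed
  have "T \<in> iso (PiGroup G D tf) X" unfolding iso_def using Thom Tb PiGroup_simps(1) by simp
  thus ?thesis using Ti Td by blast
qed

end

lemma tfc_from: assumes "pm_space S D tf" "continuous_tf tf" shows "tfc tf"
proof -
  have "triangle_function tf" using assms(1) unfolding pm_space_def by (elim conjE)
  thus ?thesis using assms(2) by (rule tfc.intro)
qed

theorem mainTheorem13:
  fixes G :: "'a monoid" and D :: "'a \<Rightarrow> 'a \<Rightarrow> dfun" and tf :: "dfun \<Rightarrow> dfun \<Rightarrow> dfun"
  assumes "pm_space (carrier G) D tf" and "continuous_tf tf"
  shows "pm_space (PiG (carrier G) D tf) (DD (carrier G) tf) tf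
       \<and> pm_complete (PiG (carrier G) D tf) (DD (carrier G) tf)
       \<and> delta (carrier G) D ` carrier G \<subseteq> PiG (carrier G) D tf
       \<and> inj_on (delta (carrier G) D) (carrier G)
       \<and> (\<forall>a\<in>carrier G. \<forall>b\<in>carrier G.
            DD (carrier G) tf (delta (carrier G) D a) (delta (carrier G) D b) = D a b)
       \<and> pm_dense (PiG (carrier G) D tf) (DD (carrier G) tf) (delta (carrier G) D ` carrier G)
       \<and> (\<forall>(X :: 'b set) \<Lambda> \<phi>. pm_space X \<Lambda> tf \<and> pm_complete X \<Lambda> \<and> \<phi> ` carrier G \<subseteq> X
            \<and> isometric (carrier G) D \<Lambda> \<phi> \<and> pm_dense X \<Lambda> (\<phi> ` carrier G)
            \<longrightarrow> (\<exists>T. bij_betw T (PiG (carrier G) D tf) X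
                   \<and> isometric (PiG (carrier G) D tf) (DD (carrier G) tf) \<Lambda> T
                   \<and> (\<forall>a\<in>carrier G. T (delta (carrier G) D a) = \<phi> a)))
       \<and> (pm_group G D tf \<longrightarrow>
            pm_group (PiGroup G D tf) (DD (carrier G) tf) tf
          \<and> delta (carrier G) D \<in> hom G (PiGroup G D tf)
          \<and> inj_on (delta (carrier G) D) (carrier G)
          \<and> (\<forall>(X :: 'b monoid) \<Lambda> \<phi>. pm_group X \<Lambda> tf \<and> pm_complete (carrier X) \<Lambda>
               \<and> \<phi> \<in> hom G X \<and> isometric (carrier G) D \<Lambda> \<phi>
               \<and> pm_dense (carrier X) \<Lambda> (\<phi> ` carrier G)
               \<longrightarrow> (\<exists>T. T \<in> iso (PiGroup G D tf) X
                      \<and> isometric (PiG (carrier G) D tf) (DD (carrier G) tf) \<Lambda> T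
                      \<and> (\<forall>a\<in>carrier G. T (delta (carrier G) D a) = \<phi> a))))"
proof -
  have tfc: "tfc tf" by (rule tfc_from[OF assms])
  interpret pms tf "carrier G" D by (rule pms.intro[OF tfc]) (unfold pms_axioms_def, rule assms(1))
  have U: "\<forall>(X :: 'b set) \<Lambda> \<phi>. pm_space X \<Lambda> tf \<and> pm_complete X \<Lambda> \<and> \<phi> ` carrier G \<subseteq> X
            \<and> isometric (carrier G) D \<Lambda> \<phi> \<and> pm_dense X \<Lambda> (\<phi> ` carrier G)
            \<longrightarrow> (\<exists>T. bij_betw T (PiG (carrier G) D tf) X
                   \<and> isometric (PiG (carrier G) D tf) (DD (carrier G) tf) \<Lambda> T
                   \<and> (\<forall>a\<in>carrier G. T (delta (carrier G) D a) = \<phi> a))"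
  proof (intro allI impI)
    fix X :: "'b set" and \<Lambda> \<phi>
    assume h: "pm_space X \<Lambda> tf \<and> pm_complete X \<Lambda> \<and> \<phi> ` carrier G \<subseteq> X
            \<and> isometric (carrier G) D \<Lambda> \<phi> \<and> pm_dense X \<Lambda> (\<phi> ` carrier G)"
    have h1: "pm_space X \<Lambda> tf" "pm_complete X \<Lambda>" "\<phi> ` carrier G \<subseteq> X"
      "isometric (carrier G) D \<Lambda> \<phi>" "pm_dense X \<Lambda> (\<phi> ` carrier G)" using h by simp_all
    from universal[OF h1] obtain T where
      T: "bij_betw T (PiG (carrier G) D tf) X \<and> isometric (PiG (carrier G) D tf) (DD (carrier G) tf) \<Lambda> T
       \<and> (\<forall>a\<in>carrier G. T (delta (carrier G) D a) = \<phi> a)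
       \<and> (\<forall>a x. cseq a \<and> x \<in> X \<and> pm_converges \<Lambda> (\<lambda>n. \<phi> (a n)) x \<longrightarrow> T (mk a) = x)" ..
    have "bij_betw T (PiG (carrier G) D tf) X \<and> isometric (PiG (carrier G) D tf) (DD (carrier G) tf) \<Lambda> T
       \<and> (\<forall>a\<in>carrier G. T (delta (carrier G) D a) = \<phi> a)" using T by (elim conjE) (intro conjI)
    thus "\<exists>T. bij_betw T (PiG (carrier G) D tf) X
                   \<and> isometric (PiG (carrier G) D tf) (DD (carrier G) tf) \<Lambda> T
                   \<and> (\<forall>a\<in>carrier G. T (delta (carrier G) D a) = \<phi> a)" by (rule exI[of _ T])
  qed
  have Gr: "pm_group G D tf \<longrightarrow>
            pm_group (PiGroup G D tf) (DD (carrier G) tf) tf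
          \<and> delta (carrier G) D \<in> hom G (PiGroup G D tf)
          \<and> inj_on (delta (carrier G) D) (carrier G)
          \<and> (\<forall>(X :: 'b monoid) \<Lambda> \<phi>. pm_group X \<Lambda> tf \<and> pm_complete (carrier X) \<Lambda>
               \<and> \<phi> \<in> hom G X \<and> isometric (carrier G) D \<Lambda> \<phi>
               \<and> pm_dense (carrier X) \<Lambda> (\<phi> ` carrier G)
               \<longrightarrow> (\<exists>T. T \<in> iso (PiGroup G D tf) X
                      \<and> isometric (PiG (carrier G) D tf) (DD (carrier G) tf) \<Lambda> T
                      \<and> (\<forall>a\<in>carrier G. T (delta (carrier G) D a) = \<phi> a)))"
  proof
    assume pg: "pm_group G D tf"
    interpret PG: pmg tf G D by (rule pmg.intro[OF tfc]) (unfold pmg_axioms_def, rule pg)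
    show "pm_group (PiGroup G D tf) (DD (carrier G) tf) tf
          \<and> delta (carrier G) D \<in> hom G (PiGroup G D tf)
          \<and> inj_on (delta (carrier G) D) (carrier G)
          \<and> (\<forall>(X :: 'b monoid) \<Lambda> \<phi>. pm_group X \<Lambda> tf \<and> pm_complete (carrier X) \<Lambda>
               \<and> \<phi> \<in> hom G X \<and> isometric (carrier G) D \<Lambda> \<phi>
               \<and> pm_dense (carrier X) \<Lambda> (\<phi> ` carrier G)
               \<longrightarrow> (\<exists>T. T \<in> iso (PiGroup G D tf) X
                      \<and> isometric (PiG (carrier G) D tf) (DD (carrier G) tf) \<Lambda> T
                      \<and> (\<forall>a\<in>carrier G. T (delta (carrier G) D a) = \<phi> a)))"
    proof (intro conjI allI impI)
      show "pm_group (PiGroup G D tf) (DD (carrier G) tf) tf" by (rule PG.PiGroup_pm_group)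
      show "delta (carrier G) D \<in> hom G (PiGroup G D tf)" by (rule PG.delta_hom)
      show "inj_on (delta (carrier G) D) (carrier G)" by (rule delta_inj)
      fix X :: "'b monoid" and \<Lambda> \<phi>
      assume h: "pm_group X \<Lambda> tf \<and> pm_complete (carrier X) \<Lambda>
               \<and> \<phi> \<in> hom G X \<and> isometric (carrier G) D \<Lambda> \<phi>
               \<and> pm_dense (carrier X) \<Lambda> (\<phi> ` carrier G)"
      have h1: "pm_group X \<Lambda> tf" "pm_complete (carrier X) \<Lambda>" "\<phi> \<in> hom G X"
        "isometric (carrier G) D \<Lambda> \<phi>" "pm_dense (carrier X) \<Lambda> (\<phi> ` carrier G)" using h by simp_all
      show "\<exists>T. T \<in> iso (PiGroup G D tf) X
                      \<and> isometric (PiG (carrier G) D tf) (DD (carrier G) tf) \<Lambda> T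
                      \<and> (\<forall>a\<in>carrier G. T (delta (carrier G) D a) = \<phi> a)"
        by (rule PG.universal_group[OF h1])
    qed
  qed
  have D5: "\<forall>a\<in>carrier G. \<forall>b\<in>carrier G.
            DD (carrier G) tf (delta (carrier G) D a) (delta (carrier G) D b) = D a b"
    by (intro ballI) (rule DD_delta)
  have D3: "delta (carrier G) D ` carrier G \<subseteq> PiG (carrier G) D tf" using delta_PiG by blast
  show ?thesis
    using PiG_pm_space PiG_complete D3 delta_inj D5 PiG_dense U Gr by (intro conjI)
qed

end
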